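(* Let $(\mathrm{G},\mu)$ be a Lorentzian Lie group, with Lie algebra $\mathfrak{g}$ and inner product $\langle\cdot,\cdot\rangle=\mu(e)$ on $\mathfrak{g}$. Then $\mu$ is flat and $\mathrm{G}$ carries a timelike left-invariant Killing vector field if and only if $\mathfrak{g}$ splits as a $\langle\cdot,\cdot\rangle$-orthogonal direct sum $\mathfrak{g}=S(\mathfrak{g})\oplus[\mathfrak{g},\mathfrak{g}]$, where $[\mathfrak{g},\mathfrak{g}]$ is abelian, and $S(\mathfrak{g})$ is abelian and contains a timelike vector (i.e. some $u\in S(\mathfrak{g})$ with $\langle u,u\rangle<0$). Moreover, in this case the dimension of $[\mathfrak{g},\mathfrak{g}]$ is even and the Levi-Civita product is given by $\mathrm{L}_a=\mathrm{ad}_a$ if $a\in S(\mathfrak{g})$ and $\mathrm{L}_a=0$ if $a\in[\mathfrak{g},\mathfrak{g}]$.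
   Context: A Lorentzian Lie group is a Lie group $\mathrm{G}$ with a left-invariant pseudo-Riemannian metric $\mu$ of signature $(-,+,\dots,+)$. The Levi-Civita connection of $\mu$ defines a product $(u,v)\mapsto uv$ on $\mathfrak{g}$ (the Levi-Civita product) by $2\langle uv,w\rangle=\langle[u,v],w\rangle-\langle[v,w],u\rangle+\langle[w,u],v\rangle$; $\mathrm{L}_u(v)=uv$. The metric is flat iff the curvature $K(u,v)=\mathrm{L}_{[u,v]}-[\mathrm{L}_u,\mathrm{L}_v]$ vanishes identically. $S(\mathfrak{g})=\{u\in\mathfrak{g}:\mathrm{ad}_u+\mathrm{ad}_u^*=0\}$, where $\mathrm{ad}_u^*$ is the adjoint of $\mathrm{ad}_u$ with respect to $\langle\cdot,\cdot\rangle$; a left-invariant vector field $X$ is Killing iff $X(e)\in S(\mathfrak{g})$. A vector field $X$ is timelike if $\mu(X,X)<0$ everywhere. *)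

theory Defs
  imports "HOL-Analysis.Analysis"
begin

text \<open>A finite-dimensional real Lie algebra: the carrier is a finite-dimensional real
vector space (type class euclidean_space is used only for its vector space structure;
its built-in inner product plays no role).\<close>

definition lie_algebra :: "('a::euclidean_space \<Rightarrow> 'a \<Rightarrow> 'a) \<Rightarrow> bool" where
  "lie_algebra br \<longleftrightarrow> bilinear br \<and> (\<forall>x. br x x = 0) \<and>
     (\<forall>x y z. br x (br y z) + br y (br z x) + br z (br x y) = 0)"

definition lorentzian :: "('a::euclidean_space \<Rightarrow> 'a \<Rightarrow> real) \<Rightarrow> bool" where
  "lorentzian b \<longleftrightarrow> bilinear b \<and> (\<forall>x y. b x y = b y x) \<and>
     (\<exists>B e0. independent B \<and> span B = UNIV \<and> e0 \<in> B \<and> b e0 e0 = -1 \<and>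
        (\<forall>e\<in>B - {e0}. b e e = 1) \<and> (\<forall>e\<in>B. \<forall>e'\<in>B. e \<noteq> e' \<longrightarrow> b e e' = 0))"

text \<open>Levi-Civita product, defined by the Koszul formula
  2<uv,w> = <[u,v],w> - <[v,w],u> + <[w,u],v>.\<close>

definition lc_prod :: "('a::euclidean_space \<Rightarrow> 'a \<Rightarrow> 'a) \<Rightarrow> ('a \<Rightarrow> 'a \<Rightarrow> real) \<Rightarrow> 'a \<Rightarrow> 'a \<Rightarrow> 'a" where
  "lc_prod br b u v = (THE z. \<forall>w. 2 * b z w = b (br u v) w - b (br v w) u + b (br w u) v)"

text \<open>Flatness: the curvature K(u,v) = L_[u,v] - [L_u, L_v] vanishes identically.\<close>

definition flat :: "('a::euclidean_space \<Rightarrow> 'a \<Rightarrow> 'a) \<Rightarrow> ('a \<Rightarrow> 'a \<Rightarrow> real) \<Rightarrow> bool" where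
  "flat br b \<longleftrightarrow> (\<forall>u v w. lc_prod br b (br u v) w
       - (lc_prod br b u (lc_prod br b v w) - lc_prod br b v (lc_prod br b u w)) = 0)"

definition skew_set :: "('a::euclidean_space \<Rightarrow> 'a \<Rightarrow> 'a) \<Rightarrow> ('a \<Rightarrow> 'a \<Rightarrow> real) \<Rightarrow> 'a set" where
  "skew_set br b = {u. \<forall>v w. b (br u v) w + b v (br u w) = 0}"

definition derived :: "('a::euclidean_space \<Rightarrow> 'a \<Rightarrow> 'a) \<Rightarrow> 'a set" where
  "derived br = span {br x y | x y. True}"

definition abelian_set :: "('a::euclidean_space \<Rightarrow> 'a \<Rightarrow> 'a) \<Rightarrow> 'a set \<Rightarrow> bool" where
  "abelian_set br A \<longleftrightarrow> (\<forall>x\<in>A. \<forall>y\<in>A. br x y = 0)"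

end

theory Submission
  imports Defs
begin

locale symform =
  fixes \<beta> :: "'a::euclidean_space \<Rightarrow> 'a \<Rightarrow> real"
  assumes bil: "bilinear \<beta>" and sym: "\<beta> x y = \<beta> y x"
begin

lemma add1[simp]: "\<beta> (x + y) z = \<beta> x z + \<beta> y z" using bilinear_ladd[OF bil] .
lemma add2[simp]: "\<beta> z (x + y) = \<beta> z x + \<beta> z y" using bilinear_radd[OF bil] .
lemma diff1[simp]: "\<beta> (x - y) z = \<beta> x z - \<beta> y z" using bilinear_lsub[OF bil] .
lemma diff2[simp]: "\<beta> z (x - y) = \<beta> z x - \<beta> z y" using bilinear_rsub[OF bil] .
lemma scale1[simp]: "\<beta> (c *\<^sub>R x) z = c * \<beta> x z" using bilinear_lmul[OF bil] by simp
lemma scale2[simp]: "\<beta> z (c *\<^sub>R x) = c * \<beta> z x" using bilinear_rmul[OF bil] by simp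
lemma zero1[simp]: "\<beta> 0 z = 0" using bilinear_lzero[OF bil] .
lemma zero2[simp]: "\<beta> z 0 = 0" using bilinear_rzero[OF bil] .
lemma neg1[simp]: "\<beta> (- x) z = - \<beta> x z" using bilinear_lneg[OF bil] .
lemma neg2[simp]: "\<beta> z (- x) = - \<beta> z x" using bilinear_rneg[OF bil] .
lemma lin1: "linear (\<lambda>x. \<beta> x z)" using bil by (simp add: bilinear_def)
lemma lin2: "linear (\<lambda>x. \<beta> z x)" using bil by (simp add: bilinear_def)
lemma sum1[simp]: "\<beta> (\<Sum>i\<in>I. f i) z = (\<Sum>i\<in>I. \<beta> (f i) z)"
  using linear_sum[OF lin1] .
lemma sum2[simp]: "\<beta> z (\<Sum>i\<in>I. f i) = (\<Sum>i\<in>I. \<beta> z (f i))"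
  using linear_sum[OF lin2] .

definition posdef :: "'a set \<Rightarrow> bool" where
  "posdef W \<longleftrightarrow> (\<forall>x\<in>W. x \<noteq> 0 \<longrightarrow> \<beta> x x > 0)"

definition onb :: "'a set \<Rightarrow> 'a set \<Rightarrow> bool" where
  "onb W F \<longleftrightarrow> finite F \<and> F \<subseteq> W \<and> W \<subseteq> span F \<and> (\<forall>f\<in>F. \<beta> f f = 1) \<and>
     (\<forall>f\<in>F. \<forall>g\<in>F. f \<noteq> g \<longrightarrow> \<beta> f g = 0)"

lemma onb_coef:
  assumes "onb W F" "g \<in> F"
  shows "\<beta> (\<Sum>f\<in>F. u f *\<^sub>R f) g = u g"
proof -
  have fin: "finite F" using assms by (simp add: onb_def)
  have "\<beta> (\<Sum>f\<in>F. u f *\<^sub>R f) g = (\<Sum>f\<in>F. u f * \<beta> f g)" by simp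
  also have "\<dots> = (\<Sum>f\<in>{g}. u f * \<beta> f g)"
    apply (rule sum.mono_neutral_right)
    using assms fin by (auto simp: onb_def)
  also have "\<dots> = u g" using assms by (simp add: onb_def)
  finally show ?thesis .
qed

lemma onb_expand:
  assumes "onb W F" "x \<in> span F"
  shows "x = (\<Sum>f\<in>F. \<beta> x f *\<^sub>R f)"
proof -
  have fin: "finite F" using assms by (simp add: onb_def)
  obtain u where u: "x = (\<Sum>f\<in>F. u f *\<^sub>R f)" using assms(2) span_finite[OF fin] by auto
  have "\<And>g. g \<in> F \<Longrightarrow> \<beta> x g = u g" using onb_coef[OF assms(1)] u by simp
  then have "(\<Sum>f\<in>F. \<beta> x f *\<^sub>R f) = (\<Sum>f\<in>F. u f *\<^sub>R f)" by (intro sum.cong) auto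
  then show ?thesis using u by simp
qed

lemma onb_expandW:
  assumes "onb W F" "x \<in> W"
  shows "x = (\<Sum>f\<in>F. \<beta> x f *\<^sub>R f)"
proof -
  have "x \<in> span F" using assms by (auto simp: onb_def)
  then show ?thesis by (rule onb_expand[OF assms(1)])
qed

lemma onb_spanW: "onb W F \<Longrightarrow> subspace W \<Longrightarrow> span F = W"
  unfolding onb_def using span_minimal[of F W] by blast

lemma onb_orth:
  assumes "onb W F" "\<And>f. f \<in> F \<Longrightarrow> \<beta> x f = 0" "w \<in> W"
  shows "\<beta> x w = 0"
proof -
  have "w = (\<Sum>f\<in>F. \<beta> w f *\<^sub>R f)" using onb_expandW assms by blast
  then have "\<beta> x w = \<beta> x (\<Sum>f\<in>F. \<beta> w f *\<^sub>R f)" by simp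
  also have "\<dots> = (\<Sum>f\<in>F. \<beta> w f * \<beta> x f)" by simp
  finally show ?thesis using assms by simp
qed

lemma onb_exists:
  assumes "subspace W" "posdef W"
  shows "\<exists>F. onb W F"
  using assms
proof (induction "dim W" arbitrary: W rule: less_induct)
  case less
  show ?case
  proof (cases "W \<subseteq> {0}")
    case True then show ?thesis by (intro exI[of _ "{}"]) (auto simp: onb_def)
  next
    case False
    then obtain w where w: "w \<in> W" "w \<noteq> 0" by blast
    have pw: "\<beta> w w > 0" using less.prems w by (auto simp: posdef_def)
    define f where "f = (1 / sqrt (\<beta> w w)) *\<^sub>R w"
    have ff: "\<beta> f f = 1" using pw unfolding f_def by (simp add: real_sqrt_mult[symmetric])
    have fW: "f \<in> W" unfolding f_def using w less.prems subspace_scale by blast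
    define W' where "W' = {x\<in>W. \<beta> x f = 0}"
    have sW': "subspace W'" using less.prems(1) unfolding W'_def subspace_def by auto
    have W'W: "W' \<subseteq> W" by (auto simp: W'_def)
    have fW': "f \<notin> W'" using ff by (auto simp: W'_def)
    have "span W' \<subset> span W" using W'W fW' fW sW' less.prems(1)
      by (metis psubsetI span_eq_iff)
    then have "dim W' < dim W" by (rule dim_psubset)
    moreover have "posdef W'" using less.prems(2) W'W by (auto simp: posdef_def)
    ultimately obtain F' where F': "onb W' F'" using less.hyps sW' by blast
    have fF': "f \<notin> F'" using F' fW' by (auto simp: onb_def)
    show ?thesis
    proof (intro exI[of _ "insert f F'"], unfold onb_def, intro conjI ballI impI)
      show "finite (insert f F')" using F' by (simp add: onb_def)
      show "insert f F' \<subseteq> W" using F' fW W'W by (auto simp: onb_def)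
      show "W \<subseteq> span (insert f F')"
      proof
        fix x assume x: "x \<in> W"
        have "x - \<beta> x f *\<^sub>R f \<in> W'" using x fW ff less.prems(1)
          by (auto simp: W'_def subspace_diff subspace_scale)
        then have "x - \<beta> x f *\<^sub>R f \<in> span F'" using F' by (auto simp: onb_def)
        then have "x - \<beta> x f *\<^sub>R f \<in> span (insert f F')" by (meson span_mono subset_insertI subsetD)
        moreover have "\<beta> x f *\<^sub>R f \<in> span (insert f F')" by (simp add: span_base span_scale)
        ultimately show "x \<in> span (insert f F')" by (metis diff_add_cancel span_add)
      qed
      fix g assume "g \<in> insert f F'"
      then show "\<beta> g g = 1" using ff F' by (auto simp: onb_def)
    next
      fix g h assume g: "g \<in> insert f F'" and h: "h \<in> insert f F'" and gh: "g \<noteq> h"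
      have F'W': "F' \<subseteq> W'" using F' by (simp add: onb_def)
      show "\<beta> g h = 0"
        using g h gh F' F'W' sym[of f] by (auto simp: onb_def W'_def)
    qed
  qed
qed

lemma lin_comb: "linear A \<Longrightarrow> A (\<Sum>g\<in>F. c g *\<^sub>R g) = (\<Sum>g\<in>F. c g *\<^sub>R A g)"
  by (simp add: linear_sum linear_scale)

definition tr :: "'a set \<Rightarrow> ('a \<Rightarrow> 'a) \<Rightarrow> real" where
  "tr F A = (\<Sum>f\<in>F. \<beta> (A f) f)"

lemma tr_comm:
  assumes F: "onb W F" and W: "subspace W" and A: "linear A" and B: "linear B"
    and AW: "\<And>x. x \<in> W \<Longrightarrow> A x \<in> W" and BW: "\<And>x. x \<in> W \<Longrightarrow> B x \<in> W"
  shows "tr F (\<lambda>x. A (B x)) = tr F (\<lambda>x. B (A x))"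
proof -
  have FW: "F \<subseteq> W" using F by (simp add: onb_def)
  have e1: "\<beta> (A (B f)) f = (\<Sum>g\<in>F. \<beta> (B f) g * \<beta> (A g) f)" if "f \<in> F" for f
  proof -
    have "B f = (\<Sum>g\<in>F. \<beta> (B f) g *\<^sub>R g)" using onb_expandW[OF F] BW FW that by blast
    then have "A (B f) = (\<Sum>g\<in>F. \<beta> (B f) g *\<^sub>R A g)"
      using lin_comb[OF A] by metis
    then show ?thesis by simp
  qed
  have e2: "\<beta> (B (A f)) f = (\<Sum>g\<in>F. \<beta> (A f) g * \<beta> (B g) f)" if "f \<in> F" for f
  proof -
    have "A f = (\<Sum>g\<in>F. \<beta> (A f) g *\<^sub>R g)" using onb_expandW[OF F] AW FW that by blast
    then have "B (A f) = (\<Sum>g\<in>F. \<beta> (A f) g *\<^sub>R B g)"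
      using lin_comb[OF B] by metis
    then show ?thesis by simp
  qed
  have "tr F (\<lambda>x. A (B x)) = (\<Sum>f\<in>F. \<Sum>g\<in>F. \<beta> (B f) g * \<beta> (A g) f)"
    unfolding tr_def using e1 by simp
  also have "\<dots> = (\<Sum>g\<in>F. \<Sum>f\<in>F. \<beta> (B f) g * \<beta> (A g) f)" by (rule sum.swap)
  also have "\<dots> = tr F (\<lambda>x. B (A x))"
    unfolding tr_def using e2 by (simp add: mult.commute)
  finally show ?thesis .
qed

lemma tr_add: "tr F (\<lambda>x. A x + B x) = tr F A + tr F B"
  unfolding tr_def by (simp add: sum.distrib)
lemma tr_diff: "tr F (\<lambda>x. A x - B x) = tr F A - tr F B"
  unfolding tr_def by (simp add: sum_subtractf)
lemma tr_scale: "tr F (\<lambda>x. c *\<^sub>R A x) = c * tr F A"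
  unfolding tr_def by (simp add: sum_distrib_left)

lemma tr_skew_zero:
  assumes "onb W F" "\<And>x y. x \<in> W \<Longrightarrow> y \<in> W \<Longrightarrow> \<beta> (A x) y = - \<beta> x (A y)"
  shows "tr F A = 0"
proof -
  have "\<beta> (A f) f = 0" if "f \<in> F" for f
    using assms(2)[of f f] that assms(1) sym[of f "A f"] by (auto simp: onb_def)
  then show ?thesis unfolding tr_def by simp
qed

lemma tr_sq_skew:
  assumes "onb W F" "\<And>x y. x \<in> W \<Longrightarrow> y \<in> W \<Longrightarrow> \<beta> (A x) y = - \<beta> x (A y)"
    and "\<And>x. x \<in> W \<Longrightarrow> A x \<in> W"
  shows "tr F (\<lambda>x. A (A x)) = - (\<Sum>f\<in>F. \<beta> (A f) (A f))"
proof -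
  have "\<beta> (A (A f)) f = - \<beta> (A f) (A f)" if "f \<in> F" for f
    using assms that by (auto simp: onb_def)
  then show ?thesis unfolding tr_def by (simp add: sum_negf)
qed

lemma sumsq_zero:
  assumes F: "onb W F" and W: "subspace W" and P: "posdef W" and A: "linear A"
    and AW: "\<And>x. x \<in> W \<Longrightarrow> A x \<in> W"
    and z: "(\<Sum>f\<in>F. \<beta> (A f) (A f)) = 0" and x: "x \<in> W"
  shows "A x = 0"
proof -
  have fin: "finite F" and FW: "F \<subseteq> W" using F by (auto simp: onb_def)
  have pos: "\<And>f. f \<in> F \<Longrightarrow> A f \<noteq> 0 \<Longrightarrow> \<beta> (A f) (A f) > 0"
    using P AW FW unfolding posdef_def by blast
  have nn: "\<And>f. f \<in> F \<Longrightarrow> \<beta> (A f) (A f) \<ge> 0"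
    using pos by (metis order.strict_implies_order order_refl zero1)
  have "\<forall>f\<in>F. \<beta> (A f) (A f) = 0" using sum_nonneg_eq_0_iff[of F "\<lambda>f. \<beta> (A f) (A f)"] fin nn z by blast
  then have Af: "\<forall>f\<in>F. A f = 0" using pos by fastforce
  have "x = (\<Sum>f\<in>F. \<beta> x f *\<^sub>R f)" using onb_expandW[OF F x] .
  then have "A x = (\<Sum>f\<in>F. \<beta> x f *\<^sub>R A f)"
    using lin_comb[OF A] by metis
  then show ?thesis using Af by simp
qed

end


lemma symplectic_even:
  fixes \<omega> :: "'a::euclidean_space \<Rightarrow> 'a \<Rightarrow> real"
  assumes bil: "bilinear \<omega>" and alt: "\<And>x. x \<in> W \<Longrightarrow> \<omega> x x = 0"
    and W: "subspace W" and nd: "\<And>x. x \<in> W \<Longrightarrow> x \<noteq> 0 \<Longrightarrow> \<exists>y\<in>W. \<omega> x y \<noteq> 0"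
  shows "even (dim W)"
  using W nd alt
proof (induction "dim W" arbitrary: W rule: less_induct)
  case less
  have ad1: "\<And>u v w. \<omega> (u + v) w = \<omega> u w + \<omega> v w" using bilinear_ladd[OF bil] .
  have ad2: "\<And>u v w. \<omega> w (u + v) = \<omega> w u + \<omega> w v" using bilinear_radd[OF bil] .
  have sb1: "\<And>u v w. \<omega> (u - v) w = \<omega> u w - \<omega> v w" using bilinear_lsub[OF bil] .
  have sb2: "\<And>u v w. \<omega> w (u - v) = \<omega> w u - \<omega> w v" using bilinear_rsub[OF bil] .
  have sc1: "\<And>c u w. \<omega> (c *\<^sub>R u) w = c * \<omega> u w" using bilinear_lmul[OF bil] by simp
  have sc2: "\<And>c u w. \<omega> w (c *\<^sub>R u) = c * \<omega> w u" using bilinear_rmul[OF bil] by simp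
  note alt = less.prems(3)
  have skew: "\<And>u v. u \<in> W \<Longrightarrow> v \<in> W \<Longrightarrow> \<omega> u v = - \<omega> v u"
  proof -
    fix u v assume uv: "u \<in> W" "v \<in> W"
    have "\<omega> (u + v) (u + v) = 0" using alt uv less.prems(1) by (simp add: subspace_add)
    then have "\<omega> u u + \<omega> u v + \<omega> v u + \<omega> v v = 0" by (simp add: ad1 ad2)
    then show "\<omega> u v = - \<omega> v u" using alt uv by simp
  qed
  show ?case
  proof (cases "W \<subseteq> {0}")
    case True
    have "dim W = 0" by (simp add: dim_eq_0 True)
    then show ?thesis by (simp del: dim_eq_0)
  next
    case False
    then obtain x where x: "x \<in> W" "x \<noteq> 0" by blast
    obtain y0 where y0: "y0 \<in> W" "\<omega> x y0 \<noteq> 0" using less.prems x by blast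
    define y where "y = (1 / \<omega> x y0) *\<^sub>R y0"
    have yW: "y \<in> W" using y0 less.prems(1) by (simp add: y_def subspace_scale)
    have xy: "\<omega> x y = 1" using y0 by (simp add: y_def sc2)
    have yx: "\<omega> y x = -1" using skew[of y x] xy x yW by simp
    have axx: "\<omega> x x = 0" and ayy: "\<omega> y y = 0" using alt x yW by auto
    define P where "P w = w - \<omega> w y *\<^sub>R x + \<omega> w x *\<^sub>R y" for w
    have P1: "\<omega> x (P w) = 0" if "w \<in> W" for w
      unfolding P_def using skew[of w x] that x by (simp add: ad2 sb2 sc2 xy axx)
    have P2: "\<omega> y (P w) = 0" if "w \<in> W" for w
      unfolding P_def using skew[of w y] that yW by (simp add: ad2 sb2 sc2 yx ayy)
    have PW: "w \<in> W \<Longrightarrow> P w \<in> W" for w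
      unfolding P_def using x yW less.prems(1)
      by (simp add: subspace_add subspace_diff subspace_scale)
    define W' where "W' = {w\<in>W. \<omega> x w = 0 \<and> \<omega> y w = 0}"
    have sW': "subspace W'" using less.prems(1) unfolding W'_def subspace_def
      by (auto simp: ad2 sc2 bilinear_rzero[OF bil])
    have W'W: "W' \<subseteq> W" by (auto simp: W'_def)
    have xW': "x \<notin> W'" using yx by (auto simp: W'_def)
    have ly: "y \<notin> span {x}"
    proof
      assume "y \<in> span {x}"
      then obtain k where "y = k *\<^sub>R x" by (auto simp: span_singleton)
      then show False using xy by (simp add: sc2 axx)
    qed
    have xy_ne: "x \<noteq> y" using xy axx by auto
    have ind: "independent {y, x}"
      using x(2) ly by (simp add: independent_insert xy_ne[symmetric])
    have dim2: "dim (span {y, x}) = 2"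
      using dim_eq_card_independent[OF ind] xy_ne by (simp add: dim_span)
    have decomp: "{a + b |a b. a \<in> span {y, x} \<and> b \<in> W'} = W"
    proof (intro set_eqI iffI)
      fix w assume "w \<in> {a + b |a b. a \<in> span {y, x} \<and> b \<in> W'}"
      then obtain a b where ab: "w = a + b" "a \<in> span {y, x}" "b \<in> W'" by blast
      have "span {y, x} \<subseteq> W" using x yW less.prems(1) by (simp add: span_minimal)
      then show "w \<in> W" using ab W'W less.prems(1) by (auto intro: subspace_add)
    next
      fix w assume w: "w \<in> W"
      have "w = (\<omega> w y *\<^sub>R x - \<omega> w x *\<^sub>R y) + P w" unfolding P_def by (simp add: algebra_simps)
      moreover have "\<omega> w y *\<^sub>R x - \<omega> w x *\<^sub>R y \<in> span {y, x}"
        by (intro span_diff span_scale span_base) auto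
      moreover have "P w \<in> W'" using P1 P2 PW w by (simp add: W'_def)
      ultimately show "w \<in> {a + b |a b. a \<in> span {y, x} \<and> b \<in> W'}" by blast
    qed
    have inter: "span {y, x} \<inter> W' \<subseteq> {0}"
    proof
      fix v assume v: "v \<in> span {y, x} \<inter> W'"
      then obtain k where k: "v - k *\<^sub>R y \<in> span {x}" by (auto simp: span_insert)
      then obtain j where j: "v - k *\<^sub>R y = j *\<^sub>R x" by (auto simp: span_singleton)
      then have vv: "v = k *\<^sub>R y + j *\<^sub>R x" by (simp add: algebra_simps)
      have "\<omega> x v = 0" "\<omega> y v = 0" using v by (auto simp: W'_def)
      then have "k = 0" "j = 0" using vv by (simp_all add: ad2 sc2 xy yx axx ayy)
      then show "v \<in> {0}" using vv by simp
    qed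
    have d0: "dim (span {y, x} \<inter> W') = 0" by (simp add: dim_eq_0 inter)
    have dimW: "dim W = 2 + dim W'"
      using dim_sums_Int[of "span {y, x}" W'] sW' decomp dim2 d0 by (simp del: dim_eq_0 add: subspace_span)
    have nd': "\<exists>z\<in>W'. \<omega> v z \<noteq> 0" if v: "v \<in> W'" "v \<noteq> 0" for v
    proof -
      obtain z where z: "z \<in> W" "\<omega> v z \<noteq> 0" using less.prems(2)[of v] v W'W by blast
      have vx: "\<omega> v x = 0" and vy: "\<omega> v y = 0" using v skew[of v x] skew[of v y] x yW W'W by (auto simp: W'_def)
      have "\<omega> v (P z) = \<omega> v z" unfolding P_def by (simp add: ad2 sb2 sc2 vx vy)
      moreover have "P z \<in> W'" using P1 P2 PW z by (simp add: W'_def)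
      ultimately show ?thesis using z by metis
    qed
    have "even (dim W')" using less.hyps[of W'] dimW sW' nd' alt W'W by auto
    then show ?thesis using dimW by simp
  qed
qed


context symform begin

lemma lin_proj: "linear (\<lambda>x. \<Sum>f\<in>F. \<beta> x f *\<^sub>R f)"
  by (rule linearI) (simp_all add: scaleR_add_left sum.distrib scaleR_sum_right)

lemma onb_proj_in: "onb W F \<Longrightarrow> subspace W \<Longrightarrow> (\<Sum>f\<in>F. \<beta> x f *\<^sub>R f) \<in> W"
  unfolding onb_def by (meson subset_iff subspace_scale subspace_sum)

lemma onb_proj_orth:
  assumes "onb W F" "w \<in> W"
  shows "\<beta> (x - (\<Sum>f\<in>F. \<beta> x f *\<^sub>R f)) w = 0"
proof (rule onb_orth[OF assms(1) _ assms(2)])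
  fix g assume "g \<in> F"
  then show "\<beta> (x - (\<Sum>f\<in>F. \<beta> x f *\<^sub>R f)) g = 0"
    using onb_coef[OF assms(1), of g "\<lambda>f. \<beta> x f"] by simp
qed

lemma family_even:
  assumes W: "subspace W" and P: "posdef W"
   and lin: "\<forall>s\<in>I. linear (A s)"
   and pres: "\<forall>s\<in>I. \<forall>x\<in>W. A s x \<in> W"
   and skw: "\<forall>s\<in>I. \<forall>x\<in>W. \<forall>y\<in>W. \<beta> (A s x) y = - \<beta> x (A s y)"
   and comm: "\<forall>s\<in>I. \<forall>t\<in>I. \<forall>x\<in>W. A s (A t x) = A t (A s x)"
   and spn: "W \<subseteq> span (\<Union>s\<in>I. A s ` W)"
  shows "even (dim W)"
  using W P pres skw comm spn
proof (induction "dim W" arbitrary: W rule: less_induct)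
  case less
  note W = less.prems(1) and P = less.prems(2) and pres = less.prems(3) and skw = less.prems(4)
    and comm = less.prems(5) and spn = less.prems(6)
  show ?case
  proof (cases "\<exists>s\<in>I. \<exists>x\<in>W. A s x \<noteq> 0")
    case False
    then have "(\<Union>s\<in>I. A s ` W) \<subseteq> {0}" by auto
    then have "span (\<Union>s\<in>I. A s ` W) \<subseteq> {0}"
      by (metis span_empty span_insert_0 span_mono subset_singletonD)
    then have "W \<subseteq> {0}" using spn by blast
    then have "dim W = 0" by (simp add: dim_eq_0)
    then show ?thesis by (simp del: dim_eq_0)
  next
    case True
    then obtain s x0 where s: "s \<in> I" and x0: "x0 \<in> W" "A s x0 \<noteq> 0" by blast
    have ls: "linear (A s)" using lin s by blast
    define W1 where "W1 = A s ` W"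
    define W2 where "W2 = {w\<in>W. A s w = 0}"
    have sW1: "subspace W1" unfolding W1_def using linear_subspace_image[OF ls W] .
    have sW2: "subspace W2" using W ls unfolding W2_def subspace_def
      by (auto simp: linear_add linear_scale linear_0)
    have W1W: "W1 \<subseteq> W" using pres s by (auto simp: W1_def)
    have W2W: "W2 \<subseteq> W" by (auto simp: W2_def)
    have P1: "posdef W1" using P W1W by (auto simp: posdef_def)
    obtain F1 where F1: "onb W1 F1" using onb_exists[OF sW1 P1] by blast
    define p where "p x = x - (\<Sum>f\<in>F1. \<beta> x f *\<^sub>R f)" for x
    have lp: "linear p" unfolding p_def
      by (intro linear_compose_sub linear_id[unfolded id_def] lin_proj)
    have projW1: "(\<Sum>f\<in>F1. \<beta> x f *\<^sub>R f) \<in> W1" for x by (rule onb_proj_in[OF F1 sW1])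
    have porth: "\<beta> (p x) w = 0" if "w \<in> W1" for x w
      unfolding p_def by (rule onb_proj_orth[OF F1 that])
    have pW: "p x \<in> W" if "x \<in> W" for x
      unfolding p_def using projW1 W1W that W by (meson subsetD subspace_diff)
    have skwW: "\<beta> (A s x) y = - \<beta> x (A s y)" if "x \<in> W" "y \<in> W" for x y
      using skw s that by blast
    have pW2: "p x \<in> W2" if x: "x \<in> W" for x
    proof -
      have a1: "A s (p x) \<in> W1" using pW x by (auto simp: W1_def)
      have a2: "A s (A s (p x)) \<in> W1" using a1 W1W by (auto simp: W1_def)
      have "\<beta> (A s (p x)) (A s (p x)) = - \<beta> (p x) (A s (A s (p x)))"
        using skwW pW x a1 W1W by blast
      also have "\<dots> = 0" using porth[OF a2] by simp
      finally have "\<beta> (A s (p x)) (A s (p x)) = 0" .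
      then have "A s (p x) = 0" using P a1 W1W unfolding posdef_def by force
      then show ?thesis using pW x by (simp add: W2_def)
    qed
    have pid: "p x = x" if x: "x \<in> W2" for x
    proof -
      have "\<beta> x f = 0" if f: "f \<in> F1" for f
      proof -
        have "f \<in> W1" using F1 f by (auto simp: onb_def)
        then obtain y where y: "y \<in> W" "f = A s y" by (auto simp: W1_def)
        have "\<beta> x f = - \<beta> (A s x) y" using skwW[of y x] y x W2W sym by auto
        then show ?thesis using x by (simp add: W2_def)
      qed
      then show ?thesis unfolding p_def by simp
    qed
    have pzero: "p x = 0" if x: "x \<in> W1" for x
      unfolding p_def using onb_expandW[OF F1 x] by simp
    have int0: "W1 \<inter> W2 \<subseteq> {0}" using pid pzero by force
    have dec: "{a + b |a b. a \<in> W1 \<and> b \<in> W2} = W"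
    proof (intro set_eqI iffI)
      fix w assume "w \<in> {a + b |a b. a \<in> W1 \<and> b \<in> W2}"
      then show "w \<in> W" using W1W W2W W by (auto intro: subspace_add)
    next
      fix w assume w: "w \<in> W"
      have "w = (\<Sum>f\<in>F1. \<beta> w f *\<^sub>R f) + p w" unfolding p_def by simp
      then show "w \<in> {a + b |a b. a \<in> W1 \<and> b \<in> W2}" using projW1 pW2 w by blast
    qed
    have d0: "dim (W1 \<inter> W2) = 0" by (simp add: dim_eq_0 int0)
    have dimW: "dim W = dim W1 + dim W2"
      using dim_sums_Int[OF sW1 sW2] dec d0 by (simp del: dim_eq_0)
    define \<omega> where "\<omega> x y = \<beta> (A s (\<Sum>f\<in>F1. \<beta> x f *\<^sub>R f)) y" for x y
    have bilw: "bilinear \<omega>"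
      unfolding \<omega>_def bilinear_def
    proof (intro conjI allI)
      fix x show "linear (\<lambda>y. \<beta> (A s (\<Sum>f\<in>F1. \<beta> x f *\<^sub>R f)) y)" by (rule lin2)
    next
      fix y
      have "linear (\<lambda>x. (\<Sum>f\<in>F1. \<beta> x f *\<^sub>R f))"
        by (rule lin_proj)
      then have "linear (\<lambda>x. A s (\<Sum>f\<in>F1. \<beta> x f *\<^sub>R f))"
        using linear_compose[OF _ ls] by (auto simp: o_def)
      then show "linear (\<lambda>x. \<beta> (A s (\<Sum>f\<in>F1. \<beta> x f *\<^sub>R f)) y)"
        using linear_compose[OF _ lin1] by (auto simp: o_def)
    qed
    have qid: "(\<Sum>f\<in>F1. \<beta> x f *\<^sub>R f) = x" if "x \<in> W1" for x
      using onb_expandW[OF F1 that] by simp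
    have altw: "\<omega> x x = 0" if "x \<in> W1" for x
      using skwW[of x x] that W1W qid sym[of x "A s x"] by (auto simp: \<omega>_def)
    have ndw: "\<exists>y\<in>W1. \<omega> x y \<noteq> 0" if x: "x \<in> W1" "x \<noteq> 0" for x
    proof -
      have "x \<notin> W2" using int0 x by blast
      then have ax: "A s x \<noteq> 0" using x W1W by (auto simp: W2_def)
      have axW1: "A s x \<in> W1" using x W1W by (auto simp: W1_def)
      have "\<omega> x (A s x) = \<beta> (A s x) (A s x)" using qid x by (simp add: \<omega>_def)
      also have "\<dots> > 0" using P ax axW1 W1W unfolding posdef_def by blast
      finally show ?thesis using axW1 by force
    qed
    have e1: "even (dim W1)" by (rule symplectic_even[OF bilw altw sW1 ndw])
    have lt: "dim W2 < dim W"
    proof -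
      have "x0 \<notin> W2" using x0 by (simp add: W2_def)
      then have "span W2 \<subset> span W" using W2W x0 W sW2 by (metis psubsetI span_eq_iff)
      then show ?thesis by (rule dim_psubset)
    qed
    have P2: "posdef W2" using P W2W by (auto simp: posdef_def)
    have pres2: "\<forall>t\<in>I. \<forall>x\<in>W2. A t x \<in> W2"
    proof (intro ballI)
      fix t x assume t: "t \<in> I" and x: "x \<in> W2"
      have "A s (A t x) = A t (A s x)" using comm s t x W2W by blast
      also have "\<dots> = 0" using x lin t by (simp add: W2_def linear_0)
      finally show "A t x \<in> W2" using pres t x W2W by (auto simp: W2_def)
    qed
    have comm1: "A t x \<in> W1" if t: "t \<in> I" and x: "x \<in> W1" for t x
    proof -
      obtain y where y: "y \<in> W" "x = A s y" using x by (auto simp: W1_def)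
      have "A t x = A s (A t y)" using comm s t y by metis
      then show ?thesis using pres t y by (auto simp: W1_def)
    qed
    have pcomm: "p (A t x) = A t (p x)" if t: "t \<in> I" and x: "x \<in> W" for t x
    proof -
      have lt': "linear (A t)" using lin t by blast
      have "x - p x \<in> W1" unfolding p_def using projW1 by simp
      then have "A t (x - p x) \<in> W1" using comm1 t by blast
      then have "p (A t (x - p x)) = 0" by (rule pzero)
      moreover have "p (A t (p x)) = A t (p x)" using pres2 t pW2 x pid by blast
      moreover have "A t x = A t (x - p x) + A t (p x)" using lt' by (simp add: linear_diff)
      ultimately show ?thesis using lp by (simp add: linear_add)
    qed
    have spn2: "W2 \<subseteq> span (\<Union>t\<in>I. A t ` W2)"
    proof
      fix w assume w: "w \<in> W2"
      then have "w \<in> span (\<Union>t\<in>I. A t ` W)" using spn W2W by blast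
      then have "p w \<in> p ` span (\<Union>t\<in>I. A t ` W)" by blast
      also have "\<dots> = span (p ` (\<Union>t\<in>I. A t ` W))" by (rule span_linear_image[OF lp, symmetric])
      also have "\<dots> \<subseteq> span (\<Union>t\<in>I. A t ` W2)"
      proof (rule span_mono, rule subsetI)
        fix z assume "z \<in> p ` (\<Union>t\<in>I. A t ` W)"
        then obtain t x where t: "t \<in> I" and x: "x \<in> W" and z: "z = p (A t x)" by blast
        then have "z = A t (p x)" using pcomm by simp
        then show "z \<in> (\<Union>t\<in>I. A t ` W2)" using t pW2 x by blast
      qed
      finally show "w \<in> span (\<Union>t\<in>I. A t ` W2)" using pid w by simp
    qed
    have e2: "even (dim W2)"
      using less.hyps[OF lt sW2 P2 pres2] skw comm spn2 W2W by blast
    show ?thesis using e1 e2 dimW by simp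
  qed
qed

end


locale LL =
  fixes br :: "'a::euclidean_space \<Rightarrow> 'a \<Rightarrow> 'a" and b :: "'a \<Rightarrow> 'a \<Rightarrow> real"
  assumes lie: "lie_algebra br" and lor: "lorentzian b"
begin

lemma bbil: "bilinear b" using lor by (simp add: lorentzian_def)
lemma bsym: "b x y = b y x" using lor by (simp add: lorentzian_def)

sublocale symform b using bbil bsym by unfold_locales auto

lemma brbil: "bilinear br" using lie by (simp add: lie_algebra_def)
lemma br_alt[simp]: "br x x = 0" using lie by (simp add: lie_algebra_def)
lemma jacobi: "br x (br y z) + br y (br z x) + br z (br x y) = 0"
  using lie by (simp add: lie_algebra_def)

lemma bradd1[simp]: "br (x + y) z = br x z + br y z" using bilinear_ladd[OF brbil] .
lemma bradd2[simp]: "br z (x + y) = br z x + br z y" using bilinear_radd[OF brbil] .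
lemma brdiff1[simp]: "br (x - y) z = br x z - br y z" using bilinear_lsub[OF brbil] .
lemma brdiff2[simp]: "br z (x - y) = br z x - br z y" using bilinear_rsub[OF brbil] .
lemma brscale1[simp]: "br (c *\<^sub>R x) z = c *\<^sub>R br x z" using bilinear_lmul[OF brbil] .
lemma brscale2[simp]: "br z (c *\<^sub>R x) = c *\<^sub>R br z x" using bilinear_rmul[OF brbil] .
lemma brzero1[simp]: "br 0 z = 0" using bilinear_lzero[OF brbil] .
lemma brzero2[simp]: "br z 0 = 0" using bilinear_rzero[OF brbil] .
lemma brneg1[simp]: "br (- x) z = - br x z" using bilinear_lneg[OF brbil] .
lemma brneg2[simp]: "br z (- x) = - br z x" using bilinear_rneg[OF brbil] .
lemma brlin1: "linear (\<lambda>x. br x z)" using brbil by (simp add: bilinear_def)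
lemma brlin2: "linear (\<lambda>x. br z x)" using brbil by (simp add: bilinear_def)

lemma br_anti: "br x y = - br y x"
proof -
  have "br (x + y) (x + y) = br x x + br y x + (br x y + br y y)" by (simp only: bradd1 bradd2)
  then have "br x y + br y x = 0" by (simp add: add.commute)
  then show ?thesis by (simp add: eq_neg_iff_add_eq_0)
qed

lemma jacobi2: "br x (br y z) = br (br x y) z + br y (br x z)"
  using jacobi[of x y z] br_anti[of z "br x y"] br_anti[of z x] by (simp add: algebra_simps)

lemma lor_basis:
  obtains B e0 where "finite B" "e0 \<in> B" "b e0 e0 = -1" "\<forall>e\<in>B - {e0}. b e e = 1"
    "\<forall>e\<in>B. \<forall>e'\<in>B. e \<noteq> e' \<longrightarrow> b e e' = 0" "span B = UNIV"
proof -
  obtain B e0 where B: "independent B" "span B = UNIV" "e0 \<in> B" "b e0 e0 = -1"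
    "\<forall>e\<in>B - {e0}. b e e = 1" "\<forall>e\<in>B. \<forall>e'\<in>B. e \<noteq> e' \<longrightarrow> b e e' = 0"
    using lor unfolding lorentzian_def by blast
  have "finite B" using independent_bound[OF B(1)] by simp
  then show ?thesis using that B by blast
qed

lemma expansion_gen:
  assumes fin: "finite B" and sp: "span B = UNIV"
    and sq: "\<forall>e\<in>B. b e e * b e e = 1"
    and orth: "\<forall>e\<in>B. \<forall>e'\<in>B. e \<noteq> e' \<longrightarrow> b e e' = 0"
  shows "x = (\<Sum>e\<in>B. (b x e * b e e) *\<^sub>R e)"
proof -
  obtain u where u: "x = (\<Sum>e\<in>B. u e *\<^sub>R e)" using span_finite[OF fin] sp by blast
  have c: "b x e' = u e' * b e' e'" if e': "e' \<in> B" for e'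
  proof -
    have "b x e' = (\<Sum>e\<in>B. u e * b e e')" using u by simp
    also have "\<dots> = (\<Sum>e\<in>{e'}. u e * b e e')"
      by (rule sum.mono_neutral_right) (use fin e' orth in auto)
    finally show ?thesis by simp
  qed
  have "u e = b x e * b e e" if "e \<in> B" for e
    using c[OF that] sq that by (metis mult.assoc mult.right_neutral)
  then show ?thesis using u by (metis (no_types, lifting) sum.cong)
qed

lemma expansion:
  obtains B e0 where "finite B" "e0 \<in> B" "b e0 e0 = -1" "\<forall>e\<in>B - {e0}. b e e = 1"
    "\<forall>e\<in>B. \<forall>e'\<in>B. e \<noteq> e' \<longrightarrow> b e e' = 0" "\<And>x. x = (\<Sum>e\<in>B. (b x e * b e e) *\<^sub>R e)"
proof -
  obtain B e0 where B: "finite B" "e0 \<in> B" "b e0 e0 = -1" "\<forall>e\<in>B - {e0}. b e e = 1"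
    "\<forall>e\<in>B. \<forall>e'\<in>B. e \<noteq> e' \<longrightarrow> b e e' = 0" "span B = UNIV" by (rule lor_basis)
  have sq: "\<forall>e\<in>B. b e e * b e e = 1"
  proof
    fix e assume "e \<in> B" then show "b e e * b e e = 1" using B by (cases "e = e0") auto
  qed
  show ?thesis using that[OF B(1-5)] expansion_gen[OF B(1) B(6) sq B(5)] by blast
qed

lemma nondeg: assumes "\<And>w. b x w = 0" shows "x = 0"
proof -
  obtain B e0 where "\<And>x. x = (\<Sum>e\<in>B. (b x e * b e e) *\<^sub>R e)" by (rule expansion) blast
  then have "x = (\<Sum>e\<in>B. (b x e * b e e) *\<^sub>R e)" by blast
  then show ?thesis using assms by simp
qed

lemma eq_by_b: assumes "\<And>w. b x w = b y w" shows "x = y"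
  using nondeg[of "x - y"] assms by simp

lemma riesz: assumes "linear \<phi>" shows "\<exists>z. \<forall>w. b z w = \<phi> w"
proof -
  obtain B e0 where ex: "\<And>x. x = (\<Sum>e\<in>B. (b x e * b e e) *\<^sub>R e)" by (rule expansion) blast
  define z where "z = (\<Sum>e\<in>B. (b e e * \<phi> e) *\<^sub>R e)"
  have "b z w = \<phi> w" for w
  proof -
    have "\<phi> w = \<phi> (\<Sum>e\<in>B. (b w e * b e e) *\<^sub>R e)" using ex[of w] by simp
    also have "\<dots> = (\<Sum>e\<in>B. (b w e * b e e) * \<phi> e)"
      using assms by (simp add: linear_sum linear_scale)
    also have "\<dots> = b z w" unfolding z_def by (simp add: bsym[of _ w] mult_ac)
    finally show ?thesis by simp
  qed
  then show ?thesis by blast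
qed

lemma timelike_orth:
  assumes u: "b u u < 0" and uv: "b u v = 0" and v: "v \<noteq> 0"
  shows "b v v > 0"
proof -
  obtain B e0 where B: "finite B" "e0 \<in> B" "b e0 e0 = -1" "\<forall>e\<in>B - {e0}. b e e = 1"
    "\<forall>e\<in>B. \<forall>e'\<in>B. e \<noteq> e' \<longrightarrow> b e e' = 0" and ex: "\<And>x. x = (\<Sum>e\<in>B. (b x e * b e e) *\<^sub>R e)"
    by (rule expansion) blast
  have coord: "b x y = - (b x e0 * b y e0) + (\<Sum>e\<in>B - {e0}. b x e * b y e)" for x y
  proof -
    have "b x y = b (\<Sum>e\<in>B. (b x e * b e e) *\<^sub>R e) y" using ex[of x] by simp
    also have "\<dots> = (\<Sum>e\<in>B. b x e * b e e * b y e)" by (simp add: bsym[of _ y])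
    also have "\<dots> = b x e0 * b e0 e0 * b y e0 + (\<Sum>e\<in>B - {e0}. b x e * b e e * b y e)"
      using B(1,2) by (simp add: sum.remove)
    also have "(\<Sum>e\<in>B - {e0}. b x e * b e e * b y e) = (\<Sum>e\<in>B - {e0}. b x e * b y e)"
      using B(4) by (intro sum.cong) auto
    finally show ?thesis using B(3) by simp
  qed
  define a0 where "a0 = b u e0"
  define c0 where "c0 = b v e0"
  define A where "A = (\<Sum>e\<in>B - {e0}. (b u e)\<^sup>2)"
  define C where "C = (\<Sum>e\<in>B - {e0}. (b v e)\<^sup>2)"
  define X where "X = (\<Sum>e\<in>B - {e0}. b u e * b v e)"
  have uu: "- a0 * a0 + A < 0" using coord[of u u] u by (simp add: a0_def A_def power2_eq_square)
  have uv': "- a0 * c0 + X = 0" using coord[of u v] uv by (simp add: a0_def c0_def X_def)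
  have vv: "b v v = - c0 * c0 + C" using coord[of v v] by (simp add: c0_def C_def power2_eq_square)
  have CS: "X\<^sup>2 \<le> A * C" unfolding X_def A_def C_def by (rule Cauchy_Schwarz_ineq_sum)
  have A0: "A \<ge> 0" unfolding A_def by (simp add: sum_nonneg)
  have C0: "C \<ge> 0" unfolding C_def by (simp add: sum_nonneg)
  have a0pos: "a0 * a0 > 0" using uu A0 by linarith
  show ?thesis
  proof (cases "C = 0")
    case True
    have ze: "\<forall>e\<in>B - {e0}. b v e = 0"
    proof -
      have "\<forall>e\<in>B - {e0}. (b v e)\<^sup>2 = 0"
        using True B(1) unfolding C_def by (subst (asm) sum_nonneg_eq_0_iff) auto
      then show ?thesis by simp
    qed
    then have "X = 0" unfolding X_def by simp
    then have "a0 * c0 = 0" using uv' by simp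
    then have "c0 = 0" using a0pos by auto
    then have "\<forall>e\<in>B. b v e = 0" using ze c0_def by auto
    then have "v = 0" using ex[of v] by simp
    then show ?thesis using v by simp
  next
    case False
    then have Cp: "C > 0" using C0 by simp
    have "(a0 * c0)\<^sup>2 \<le> A * C" using CS uv' by (simp add: algebra_simps)
    also have "A * C < (a0 * a0) * C" using uu Cp by (intro mult_strict_right_mono) auto
    finally have "(a0 * a0) * (c0 * c0) < (a0 * a0) * C" by (simp add: power2_eq_square mult_ac)
    then have "c0 * c0 < C" using a0pos by (simp add: mult_less_cancel_left_pos)
    then show ?thesis using vv by simp
  qed
qed

end


context LL begin

definition kos :: "'a \<Rightarrow> 'a \<Rightarrow> 'a \<Rightarrow> real" where
  "kos u v w = b (br u v) w - b (br v w) u + b (br w u) v"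

definition L :: "'a \<Rightarrow> 'a \<Rightarrow> 'a" where "L u v = lc_prod br b u v"

lemma kos_lin: "linear (\<lambda>w. kos u v w / 2)"
  by (rule linearI) (simp_all add: kos_def bsym[of _ u] bsym[of _ v] add_divide_distrib diff_divide_distrib
      algebra_simps)

lemma kos_ex1: "\<exists>!z. \<forall>w. 2 * b z w = kos u v w"
proof -
  obtain z where z: "\<forall>w. b z w = kos u v w / 2" using riesz[OF kos_lin] by blast
  show ?thesis
  proof (rule ex1I[of _ z])
    show "\<forall>w. 2 * b z w = kos u v w" by (simp add: z)
    fix y assume h: "\<forall>w. 2 * b y w = kos u v w"
    show "y = z"
    proof (rule eq_by_b)
      fix w show "b y w = b z w" using h[rule_format, of w] z[rule_format, of w] by linarith
    qed
  qed
qed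

lemma koszul: "2 * b (L u v) w = kos u v w"
proof -
  have "\<forall>w. 2 * b (L u v) w = kos u v w"
    unfolding L_def lc_prod_def kos_def[symmetric] by (rule theI'[OF kos_ex1])
  then show ?thesis by blast
qed

lemma Lchar: assumes "\<And>w. 2 * b z w = kos u v w" shows "L u v = z"
  using kos_ex1[of u v] koszul[of u v] assms by blast

lemma bL: "b (L u v) w = kos u v w / 2" using koszul[of u v w] by linarith

lemma Lchar': assumes "\<And>w. b z w = kos u v w / 2" shows "L u v = z"
  by (rule Lchar) (simp add: assms)

lemma kos_add1: "kos (x + y) v w = kos x v w + kos y v w" by (simp add: kos_def)
lemma kos_add2: "kos v (x + y) w = kos v x w + kos v y w" by (simp add: kos_def)
lemma kos_scale1: "kos (c *\<^sub>R x) v w = c * kos x v w" by (simp add: kos_def algebra_simps)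
lemma kos_scale2: "kos v (c *\<^sub>R x) w = c * kos v x w" by (simp add: kos_def algebra_simps)
lemma kos_diff1: "kos (x - y) v w = kos x v w - kos y v w" by (simp add: kos_def)
lemma kos_diff2: "kos v (x - y) w = kos v x w - kos v y w" by (simp add: kos_def)
lemma kos_neg1: "kos (- x) v w = - kos x v w" by (simp add: kos_def)
lemma kos_neg2: "kos v (- x) w = - kos v x w" by (simp add: kos_def)

lemma L_add1[simp]: "L (x + y) v = L x v + L y v"
  by (rule Lchar') (simp add: bL kos_add1 add_divide_distrib)
lemma L_add2[simp]: "L v (x + y) = L v x + L v y"
  by (rule Lchar') (simp add: bL kos_add2 add_divide_distrib)
lemma L_scale1[simp]: "L (c *\<^sub>R x) v = c *\<^sub>R L x v"
  by (rule Lchar') (simp add: bL kos_scale1)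
lemma L_scale2[simp]: "L v (c *\<^sub>R x) = c *\<^sub>R L v x"
  by (rule Lchar') (simp add: bL kos_scale2)
lemma L_zero1[simp]: "L 0 v = 0"
  by (rule Lchar) (simp add: kos_def)
lemma L_zero2[simp]: "L v 0 = 0"
  by (rule Lchar) (simp add: kos_def)
lemma L_diff1[simp]: "L (x - y) v = L x v - L y v"
  by (rule Lchar') (simp add: bL kos_diff1 diff_divide_distrib)
lemma L_diff2[simp]: "L v (x - y) = L v x - L v y"
  by (rule Lchar') (simp add: bL kos_diff2 diff_divide_distrib)
lemma L_neg1[simp]: "L (- x) v = - L x v"
  by (rule Lchar') (simp add: bL kos_neg1)
lemma L_neg2[simp]: "L v (- x) = - L v x"
  by (rule Lchar') (simp add: bL kos_neg2)
lemma Llin1: "linear (\<lambda>x. L x v)" by (rule linearI) simp_all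
lemma Llin2: "linear (\<lambda>x. L v x)" by (rule linearI) simp_all
lemma L_sum1[simp]: "L (\<Sum>i\<in>I. f i) v = (\<Sum>i\<in>I. L (f i) v)"
  using linear_sum[OF Llin1] .
lemma L_sum2[simp]: "L v (\<Sum>i\<in>I. f i) = (\<Sum>i\<in>I. L v (f i))"
  using linear_sum[OF Llin2] .

lemma skewL: "b (L u v) w = - b v (L u w)"
proof -
  have "b v (L u w) = b (L u w) v" by (rule bsym)
  then show ?thesis
    by (simp add: bL kos_def br_anti[of w u] br_anti[of v u] br_anti[of w v]; simp add: bsym; linarith)
qed

lemma torsion: "L u v - L v u = br u v"
proof (rule eq_by_b)
  fix w
  show "b (L u v - L v u) w = b (br u v) w"
    by (simp only: diff1 bL) (simp add: kos_def br_anti[of v u] br_anti[of w v] br_anti[of w u] field_simps)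
qed

lemma torsion': "L u v = br u v + L v u" using torsion[of u v] by (simp add: algebra_simps)

end


context LL begin

abbreviation SS where "SS \<equiv> skew_set br b"
abbreviation DD where "DD \<equiv> derived br"

lemma Sskew: "s \<in> SS \<Longrightarrow> b (br s v) w = - b v (br s w)"
  unfolding skew_set_def by (simp add: eq_neg_iff_add_eq_0)

lemma subspace_S: "subspace SS"
  unfolding subspace_def skew_set_def
proof (intro conjI ballI allI CollectI)
  fix c x v w assume "x \<in> {u. \<forall>v w. b (br u v) w + b v (br u w) = 0}"
  then have "b (br x v) w + b v (br x w) = 0" by blast
  then have "c * (b (br x v) w + b v (br x w)) = 0" by simp
  then show "b (br (c *\<^sub>R x) v) w + b v (br (c *\<^sub>R x) w) = 0" by (simp add: algebra_simps)
qed (auto simp: algebra_simps)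

lemma subspace_D: "subspace DD" unfolding derived_def by (rule subspace_span)

lemma br_in_D: "br x y \<in> DD" unfolding derived_def by (rule span_base) blast

lemma D_induct:
  assumes "d \<in> DD" "subspace {d. P d}" "\<And>x y. P (br x y)"
  shows "P d"
proof -
  have "d \<in> span {br x y | x y. True}" using assms(1) unfolding derived_def .
  then show "P d" by (rule span_induct[OF _ assms(2)]) (use assms(3) in auto)
qed

lemma Ls_right: "s \<in> SS \<Longrightarrow> 2 * b (L v s) w = - b (br v w) s"
  unfolding koszul kos_def using Sskew[of s v w] br_anti[of v s] bsym[of v "br s w"]
  by (simp add: br_anti[of w v])

lemma Lss: "s \<in> SS \<Longrightarrow> L s s = 0"
proof -
  assume s: "s \<in> SS"
  have "b (L s s) w = 0" for w
    using Ls_right[OF s, of s w] Sskew[OF s, of w s] by simp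
  then show ?thesis by (intro nondeg)
qed

lemma Rskew: "s \<in> SS \<Longrightarrow> b (L a s) c = - b (L c s) a"
  using Ls_right[of s a c] Ls_right[of s c a] br_anti[of a c] by simp

lemma S_L_commute:
  assumes s: "s \<in> SS" and fl: "flat br b"
  shows "L v (L w s) = L (L v w) s"
proof -
  have flt: "L (br u v) w = L u (L v w) - L v (L u w)" for u v w
    using fl unfolding flat_def L_def by (simp add: algebra_simps)
  define T where "T v w = L v (L w s) - L (L v w) s" for v w
  have Tsym: "T v w = T w v" for v w
  proof -
    have "T v w - T w v = L v (L w s) - L w (L v s) - L (L v w - L w v) s"
      unfolding T_def by (simp add: algebra_simps)
    also have "\<dots> = 0" using flt[of v w s] torsion[of v w] by simp
    finally show ?thesis by simp
  qed
  have Tskew: "b (T v w) z = - b (T v z) w" for v w z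
  proof -
    have "b (T v w) z = - b (L w s) (L v z) + b (L z s) (L v w)"
      unfolding T_def using skewL[of v "L w s" z] Rskew[OF s, of "L v w" z] by simp
    moreover have "b (T v z) w = - b (L z s) (L v w) + b (L w s) (L v z)"
      unfolding T_def using skewL[of v "L z s" w] Rskew[OF s, of "L v z" w] by simp
    ultimately show ?thesis by simp
  qed
  have "b (T v w) z = 0" for z
  proof -
    have "b (T v w) z = b (T w v) z" using Tsym by simp
    also have "\<dots> = - b (T w z) v" by (rule Tskew)
    also have "\<dots> = - b (T z w) v" using Tsym by simp
    also have "\<dots> = b (T z v) w" using Tskew[of z w v] by simp
    also have "\<dots> = b (T v z) w" using Tsym by simp
    also have "\<dots> = - b (T v w) z" using Tskew[of v z w] by simp
    finally show ?thesis by simp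
  qed
  then have "T v w = 0" by (intro nondeg)
  then show ?thesis unfolding T_def by simp
qed

end

locale FL = LL +
  fixes u0
  assumes fl: "flat br b" and u0S: "u0 \<in> skew_set br b" and u0t: "b u0 u0 < 0"
begin

lemma flt: "L (br u v) w = L u (L v w) - L v (L u w)"
  using fl unfolding flat_def L_def by (simp add: algebra_simps)

lemma RR: "s \<in> SS \<Longrightarrow> L (L v s) s = 0"
  using S_L_commute[OF _ fl, of s v s] Lss[of s] by simp

lemma null_R: "s \<in> SS \<Longrightarrow> b (L v s) (L v s) = 0"
  using Rskew[of s "L v s" v] RR[of s v] by simp

lemma Ru0: "L v u0 = 0"
proof (rule ccontr)
  assume ne: "L v u0 \<noteq> 0"
  have "b u0 (L v u0) = 0"
    using Rskew[OF u0S, of v u0] Lss[OF u0S] bsym[of u0] by simp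
  then have "b (L v u0) (L v u0) > 0" using timelike_orth[OF u0t _ ne] by blast
  then show False using null_R[OF u0S] by simp
qed

lemma Rs: assumes s: "s \<in> SS" shows "L v s = 0"
proof (rule ccontr)
  assume ne: "L v s \<noteq> 0"
  have "b (L v s) u0 = - b s (L v u0)" by (rule skewL)
  then have "b u0 (L v s) = 0" using Ru0 bsym[of u0] by simp
  then have "b (L v s) (L v s) > 0" using timelike_orth[OF u0t _ ne] by blast
  then show False using null_R[OF s] by simp
qed

lemma S_perp_br: "s \<in> SS \<Longrightarrow> b (br v w) s = 0"
  using Ls_right[of s v w] Rs[of s v] by simp

lemma S_perp_D: assumes "s \<in> SS" "d \<in> DD" shows "b d s = 0"
  using assms(2)
proof (rule D_induct)
  show "subspace {d. b d s = 0}" unfolding subspace_def by simp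
  show "\<And>x y. b (br x y) s = 0" using S_perp_br[OF assms(1)] .
qed

lemma posdef_D: "posdef DD"
  unfolding posdef_def
proof (intro ballI impI)
  fix d assume "d \<in> DD" "d \<noteq> 0"
  then show "b d d > 0" using timelike_orth[OF u0t] S_perp_D[OF u0S] bsym[of u0] by metis
qed

lemma Ls: "s \<in> SS \<Longrightarrow> L s v = br s v"
  using torsion'[of s v] Rs[of s v] by simp

end


context FL begin

lemma perpD_in_S:
  assumes x: "\<And>d. d \<in> DD \<Longrightarrow> b x d = 0"
  shows "x \<in> SS"
proof -
  have xbr: "b x (br v w) = 0" for v w using x br_in_D by blast
  have xbr': "b (br v w) x = 0" for v w using xbr bsym by metis
  have sx: "br s x = 0" if s: "s \<in> SS" for s
  proof -
    have "L s x = br s x" using Ls[OF s] .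
    have "2 * b (L s x) w = b (br s x) w" for w
      unfolding koszul kos_def using S_perp_br[OF s, of x w] by (simp add: xbr')
    then have "b (br s x) w = 0" for w using Ls[OF s, of x] by simp
    then show ?thesis by (intro nondeg)
  qed
  have Lxx: "L x x = 0"
  proof (rule nondeg)
    fix w show "b (L x x) w = 0" using koszul[of x x w] by (simp add: kos_def xbr')
  qed
  have Rsym: "b (L v x) w = b (L w x) v" for v w
    using koszul[of v x w] koszul[of w x v] by (simp add: kos_def xbr' br_anti[of x v] br_anti[of x w])
  have key: "L (L e x) x - L (L x e) x + L x (L e x) = 0" for e
  proof -
    have "L (br e x) x = - L x (L e x)" using flt[of e x x] Lxx by simp
    moreover have "br e x = L e x - L x e" using torsion[of e x] by simp
    ultimately show ?thesis by (simp add: algebra_simps)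
  qed
  define V where "V = {v. b v u0 = 0}"
  have sV: "subspace V" unfolding V_def subspace_def by simp
  have pV: "posdef V" unfolding posdef_def V_def
    using timelike_orth[OF u0t] bsym[of u0] by auto
  obtain F where F: "onb V F" using onb_exists[OF sV pV] by blast
  define R where "R v = L v x" for v
  define A where "A v = L x v" for v
  have lR: "linear R" unfolding R_def by (rule Llin1)
  have lA: "linear A" unfolding A_def by (rule Llin2)
  have u0x: "L u0 x = 0" using Ls[OF u0S, of x] sx[OF u0S] by simp
  have RV: "R v \<in> V" if "v \<in> V" for v
    using Rsym[of v u0] u0x unfolding R_def V_def by simp
  have AV: "A v \<in> V" if "v \<in> V" for v
    using skewL[of x v u0] Ru0[of x] that unfolding A_def V_def by simp
  have "tr F (\<lambda>v. R (R v)) = tr F (\<lambda>v. R (A v)) - tr F (\<lambda>v. A (R v))"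
  proof -
    have "R (R v) = R (A v) - A (R v)" for v using key[of v] unfolding R_def A_def
      by (simp add: algebra_simps)
    then have "tr F (\<lambda>v. R (R v)) = tr F (\<lambda>v. R (A v) - A (R v))" by simp
    then show ?thesis by (simp add: tr_diff)
  qed
  also have "\<dots> = 0" using tr_comm[OF F sV lR lA RV AV] by simp
  finally have t0: "tr F (\<lambda>v. R (R v)) = 0" .
  have "tr F (\<lambda>v. R (R v)) = (\<Sum>f\<in>F. b (R f) (R f))"
    unfolding tr_def R_def using Rsym by simp
  then have "(\<Sum>f\<in>F. b (R f) (R f)) = 0" using t0 by simp
  then have RV0: "R v = 0" if "v \<in> V" for v
    using sumsq_zero[OF F sV pV lR RV] that by blast
  have R0: "L y x = 0" for y
  proof -
    define c where "c = b y u0 / b u0 u0"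
    have "y - c *\<^sub>R u0 \<in> V" unfolding V_def c_def using u0t by simp
    then have "L (y - c *\<^sub>R u0) x = 0" using RV0 unfolding R_def by blast
    then show ?thesis using u0x by simp
  qed
  have brx: "br x v = L x v" for v using torsion[of x v] R0[of v] by simp
  show "x \<in> SS" unfolding skew_set_def using skewL[of x] by (simp add: brx)
qed

end


context FL begin

lemma S_int_D: "x \<in> SS \<Longrightarrow> x \<in> DD \<Longrightarrow> x = 0"
  using S_perp_D[of x x] posdef_D unfolding posdef_def by force

lemma decomp: "\<exists>s d. s \<in> SS \<and> d \<in> DD \<and> x = s + d"
proof -
  obtain F where F: "onb DD F" using onb_exists[OF subspace_D posdef_D] by blast
  define d where "d = (\<Sum>f\<in>F. b x f *\<^sub>R f)"
  have dD: "d \<in> DD" unfolding d_def by (rule onb_proj_in[OF F subspace_D])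
  have "b (x - d) e = 0" if "e \<in> DD" for e unfolding d_def by (rule onb_proj_orth[OF F that])
  then have "x - d \<in> SS" by (rule perpD_in_S)
  then show ?thesis using dD by (intro exI[of _ "x - d"] exI[of _ d]) simp
qed

lemma S_plus_D: "SS + DD = UNIV"
  apply (auto simp: set_plus_def) using decomp by blast

lemma S_abelian: assumes s: "s \<in> SS" and t: "t \<in> SS" shows "br s t = 0"
proof -
  have "b (br s t) d = 0" if d: "d \<in> DD" for d
  proof -
    have "b (br s t) d = - b t (br s d)" using Sskew[OF s] .
    also have "\<dots> = 0"
    proof -
      have "b (br s d) t = 0" by (rule S_perp_D[OF t br_in_D])
      then show ?thesis by (simp add: bsym)
    qed
    finally show ?thesis .
  qed
  then have "br s t \<in> SS" by (rule perpD_in_S)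
  then show ?thesis using S_int_D br_in_D by blast
qed

lemma perpS_in_D: assumes y: "\<And>s. s \<in> SS \<Longrightarrow> b y s = 0" shows "y \<in> DD"
proof -
  obtain s d where sd: "s \<in> SS" "d \<in> DD" "y = s + d" using decomp by blast
  have "b s z = 0" for z
  proof -
    obtain s' d' where sd': "s' \<in> SS" "d' \<in> DD" "z = s' + d'" using decomp by blast
    have "b s s' = b y s' - b d s'" using sd by simp
    also have "\<dots> = 0" using y sd' S_perp_D[OF sd'(1) sd(2)] by simp
    finally have 1: "b s s' = 0" .
    have 2: "b s d' = 0" using S_perp_D[OF sd(1) sd'(2)] bsym by metis
    show ?thesis using 1 2 sd' by simp
  qed
  then have "s = 0" by (rule nondeg)
  then show ?thesis using sd by simp
qed

lemma L_pres_D: assumes d: "d \<in> DD" shows "L x d \<in> DD"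
proof (rule perpS_in_D)
  fix s assume s: "s \<in> SS"
  have "b (L x d) s = - b d (L x s)" by (rule skewL)
  then show "b (L x d) s = 0" using Rs[OF s] by simp
qed

lemma L_kill_S: "s \<in> SS \<Longrightarrow> L x s = 0" by (rule Rs)

lemma Lskew_D: "b (L x u) v = - b u (L x v)" by (rule skewL)

end


lemma sum_antisym_zero:
  fixes F :: "'b \<Rightarrow> 'b \<Rightarrow> 'c::real_vector"
  assumes "\<And>g h. F g h = - F h g"
  shows "(\<Sum>g\<in>G. \<Sum>h\<in>G. F g h) = 0"
proof -
  have "(\<Sum>g\<in>G. \<Sum>h\<in>G. F g h) = (\<Sum>h\<in>G. \<Sum>g\<in>G. F g h)" by (rule sum.swap)
  also have "\<dots> = (\<Sum>h\<in>G. \<Sum>g\<in>G. - F h g)" by (intro sum.cong refl) (rule assms)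
  also have "\<dots> = - (\<Sum>h\<in>G. \<Sum>g\<in>G. F h g)" by (simp add: sum_negf)
  finally have e: "(\<Sum>g\<in>G. \<Sum>h\<in>G. F g h) = - (\<Sum>g\<in>G. \<Sum>h\<in>G. F g h)" .
  have "(2::real) *\<^sub>R (\<Sum>g\<in>G. \<Sum>h\<in>G. F g h) = (\<Sum>g\<in>G. \<Sum>h\<in>G. F g h) + (\<Sum>g\<in>G. \<Sum>h\<in>G. F g h)"
    by (simp add: scaleR_2)
  also have "\<dots> = 0" using e by (metis add.right_inverse)
  finally show ?thesis by simp
qed

context FL begin

definition ZZ where "ZZ = {d\<in>DD. \<forall>v. L d v = 0}"
definition PP where "PP = {d\<in>DD. \<forall>z\<in>ZZ. b d z = 0}"

lemma sZ: "subspace ZZ" using subspace_D unfolding ZZ_def subspace_def by auto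
lemma sP: "subspace PP" using subspace_D unfolding PP_def subspace_def by auto
lemma ZD: "ZZ \<subseteq> DD" by (auto simp: ZZ_def)
lemma PD: "PP \<subseteq> DD" by (auto simp: PP_def)
lemma pZ: "posdef ZZ" using posdef_D ZD by (auto simp: posdef_def)
lemma pP: "posdef PP" using posdef_D PD by (auto simp: posdef_def)

lemma ZP0: "x \<in> ZZ \<Longrightarrow> x \<in> PP \<Longrightarrow> x = 0"
  using pP unfolding PP_def posdef_def by force

lemma LpresZ: assumes z: "z \<in> ZZ" shows "L x z \<in> ZZ"
proof -
  have Lz: "L z v = 0" for v using z by (simp add: ZZ_def)
  have "L x z = br x z" using torsion'[of x z] Lz by simp
  moreover have "L (br x z) v = 0" for v using flt[of x z v] Lz by simp
  moreover have "L x z \<in> DD" using L_pres_D z ZD by blast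
  ultimately show ?thesis by (simp add: ZZ_def)
qed

lemma LpresP: assumes p: "p \<in> PP" shows "L x p \<in> PP"
proof -
  have "b (L x p) z = 0" if "z \<in> ZZ" for z
    using skewL[of x p z] LpresZ[OF that, of x] p by (simp add: PP_def)
  moreover have "L x p \<in> DD" using L_pres_D p PD by blast
  ultimately show ?thesis by (simp add: PP_def)
qed

lemma brP: "p \<in> PP \<Longrightarrow> q \<in> PP \<Longrightarrow> br p q \<in> PP"
  using torsion[of p q] LpresP sP by (metis subspace_diff)

lemma bases:
  obtains FZ FP where "onb ZZ FZ" "onb PP FP" "onb DD (FZ \<union> FP)" "FZ \<inter> FP = {}"
proof -
  obtain FZ where FZ: "onb ZZ FZ" using onb_exists[OF sZ pZ] by blast
  obtain FP where FP: "onb PP FP" using onb_exists[OF sP pP] by blast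
  have FZZ: "FZ \<subseteq> ZZ" and FPP: "FP \<subseteq> PP" using FZ FP by (auto simp: onb_def)
  have disj: "FZ \<inter> FP = {}"
  proof (rule ccontr)
    assume "FZ \<inter> FP \<noteq> {}"
    then obtain f where f: "f \<in> FZ" "f \<in> FP" by blast
    then have "f = 0" using ZP0 FZZ FPP by blast
    moreover have "b f f = 1" using f FZ by (auto simp: onb_def)
    ultimately show False by simp
  qed
  have "onb DD (FZ \<union> FP)"
    unfolding onb_def
  proof (intro conjI ballI impI)
    show "finite (FZ \<union> FP)" using FZ FP by (simp add: onb_def)
    show "FZ \<union> FP \<subseteq> DD" using FZZ FPP ZD PD by blast
    show "DD \<subseteq> span (FZ \<union> FP)"
    proof
      fix d assume d: "d \<in> DD"
      define z where "z = (\<Sum>f\<in>FZ. b d f *\<^sub>R f)"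
      have zZ: "z \<in> ZZ" unfolding z_def by (rule onb_proj_in[OF FZ sZ])
      have "b (d - z) w = 0" if "w \<in> ZZ" for w unfolding z_def by (rule onb_proj_orth[OF FZ that])
      moreover have "d - z \<in> DD" using d zZ ZD subspace_D by (meson subsetD subspace_diff)
      ultimately have "d - z \<in> PP" by (simp add: PP_def)
      then have "d - z \<in> span (FZ \<union> FP)" using FP by (auto simp: onb_def intro: span_mono[THEN subsetD])
      moreover have "z \<in> span (FZ \<union> FP)" using zZ FZ by (auto simp: onb_def intro: span_mono[THEN subsetD])
      ultimately show "d \<in> span (FZ \<union> FP)" by (metis diff_add_cancel span_add)
    qed
  next
    fix f assume "f \<in> FZ \<union> FP"
    then show "b f f = 1" using FZ FP by (auto simp: onb_def)
  next
    fix f g assume f: "f \<in> FZ \<union> FP" and g: "g \<in> FZ \<union> FP" and fg: "f \<noteq> g"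
    show "b f g = 0"
    proof (cases "f \<in> FZ")
      case True
      show ?thesis
      proof (cases "g \<in> FZ")
        case True then show ?thesis using \<open>f \<in> FZ\<close> fg FZ by (auto simp: onb_def)
      next
        case False then have "g \<in> PP" using g FPP by blast
        then show ?thesis using \<open>f \<in> FZ\<close> FZZ bsym[of f g] by (auto simp: PP_def)
      qed
    next
      case False then have fP: "f \<in> FP" using f by blast
      show ?thesis
      proof (cases "g \<in> FZ")
        case True then show ?thesis using fP FPP FZZ by (auto simp: PP_def)
      next
        case False then show ?thesis using fP g fg FP by (auto simp: onb_def)
      qed
    qed
  qed
  then show ?thesis using that FZ FP disj by blast
qed

end


context FL begin

definition beta :: "'a set \<Rightarrow> 'a \<Rightarrow> 'a \<Rightarrow> real" where
  "beta FD x y = - tr FD (\<lambda>v. L x (L y v))"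

lemma LpresD': "x \<in> DD \<Longrightarrow> L y x \<in> DD" by (rule L_pres_D)

lemma beta_sym: assumes FD: "onb DD FD" shows "beta FD x y = beta FD y x"
  unfolding beta_def using tr_comm[OF FD subspace_D Llin2 Llin2 LpresD' LpresD'] by simp

lemma beta_bil: "bilinear (beta FD)"
  unfolding bilinear_def
proof (intro conjI allI)
  fix x show "linear (beta FD x)"
    by (rule linearI) (simp_all add: beta_def tr_def sum.distrib sum_distrib_left algebra_simps)
next
  fix y show "linear (\<lambda>x. beta FD x y)"
    by (rule linearI) (simp_all add: beta_def tr_def sum.distrib sum_distrib_left algebra_simps)
qed

lemma tr_ad_D: assumes FD: "onb DD FD" and d: "d \<in> DD" shows "tr FD (\<lambda>y. br d y) = 0"
  using d
proof (rule D_induct)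
  show "subspace {d. tr FD (\<lambda>y. br d y) = 0}"
    unfolding subspace_def tr_def by (simp add: sum.distrib flip: sum_distrib_left)
  fix x z
  have "tr FD (\<lambda>y. br (br x z) y) = tr FD (\<lambda>y. br x (br z y) - br z (br x y))"
    using jacobi2[of x z] by (simp add: algebra_simps)
  also have "\<dots> = tr FD (\<lambda>y. br x (br z y)) - tr FD (\<lambda>y. br z (br x y))" by (rule tr_diff)
  also have "\<dots> = 0"
    using tr_comm[OF FD subspace_D brlin2 brlin2 br_in_D br_in_D] by simp
  finally show "tr FD (\<lambda>y. br (br x z) y) = 0" .
qed

lemma tr_Lx: assumes FD: "onb DD FD" shows "tr FD (\<lambda>y. L x y) = 0"
  by (rule tr_skew_zero[OF FD]) (rule skewL)

lemma beta_inv: assumes FD: "onb DD FD" shows "beta FD (br x y) w = - beta FD y (br x w)"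
proof -
  have "beta FD (br x y) w = - tr FD (\<lambda>v. L x (L y (L w v)) - L y (L x (L w v)))"
    unfolding beta_def using flt by simp
  also have "\<dots> = - tr FD (\<lambda>v. L x (L y (L w v))) + tr FD (\<lambda>v. L y (L x (L w v)))"
    by (simp add: tr_diff)
  finally have 1: "beta FD (br x y) w = - tr FD (\<lambda>v. L x (L y (L w v))) + tr FD (\<lambda>v. L y (L x (L w v)))" .
  have "beta FD y (br x w) = - tr FD (\<lambda>v. L y (L x (L w v)) - L y (L w (L x v)))"
    unfolding beta_def using flt by simp
  also have "\<dots> = - tr FD (\<lambda>v. L y (L x (L w v))) + tr FD (\<lambda>v. L y (L w (L x v)))"
    by (simp add: tr_diff)
  finally have 2: "beta FD y (br x w) = - tr FD (\<lambda>v. L y (L x (L w v))) + tr FD (\<lambda>v. L y (L w (L x v)))" .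
  have lyw: "linear (\<lambda>v. L y (L w v))"
    using linear_compose[OF Llin2 Llin2] by (simp add: o_def)
  have 3: "tr FD (\<lambda>v. L x (L y (L w v))) = tr FD (\<lambda>v. L y (L w (L x v)))"
    using tr_comm[OF FD subspace_D Llin2 lyw LpresD'] LpresD' by simp
  show ?thesis using 1 2 3 by simp
qed

lemma beta_pos: assumes FD: "onb DD FD" and p: "p \<in> PP" "p \<noteq> 0" shows "beta FD p p > 0"
proof -
  have eq: "beta FD p p = (\<Sum>f\<in>FD. b (L p f) (L p f))"
    unfolding beta_def using tr_sq_skew[OF FD skewL LpresD'] by simp
  have fin: "finite FD" and FDD: "FD \<subseteq> DD" using FD by (auto simp: onb_def)
  have nn: "b (L p f) (L p f) \<ge> 0" if "f \<in> FD" for f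
  proof (cases "L p f = 0")
    case False then show ?thesis using posdef_D LpresD' that FDD unfolding posdef_def by force
  qed simp
  have "beta FD p p \<noteq> 0"
  proof
    assume "beta FD p p = 0"
    then have s0: "(\<Sum>f\<in>FD. b (L p f) (L p f)) = 0" using eq by simp
    have Ld: "L p d = 0" if "d \<in> DD" for d
      by (rule sumsq_zero[OF FD subspace_D posdef_D Llin2 LpresD' s0 that])
    have "L p v = 0" for v
    proof -
      obtain s d where sd: "s \<in> SS" "d \<in> DD" "v = s + d" using decomp by blast
      then show ?thesis using Ld L_kill_S by simp
    qed
    then have "p \<in> ZZ" using p PD by (auto simp: ZZ_def)
    then show False using ZP0 p by blast
  qed
  moreover have "beta FD p p \<ge> 0" using eq nn by (simp add: sum_nonneg)
  ultimately show ?thesis by simp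
qed

end


context FL begin

lemma casimir:
  assumes FD: "onb DD FD" and G: "symform.onb (beta FD) PP G" and p: "p \<in> PP"
  shows "L p (\<Sum>g\<in>G. L g g) = (\<Sum>g\<in>G. L g (L g p))"
proof -
  interpret Bt: symform "beta FD" using beta_bil beta_sym[OF FD] by unfold_locales auto
  have GP: "G \<subseteq> PP" using G by (simp add: Bt.onb_def)
  have e1: "L p (L g g) = L g (L g p) + (L g (br p g) + L (br p g) g)" for g
  proof -
    have "L (br p g) g = L p (L g g) - L g (L p g)" by (rule flt)
    moreover have "L p g = br p g + L g p" by (rule torsion')
    ultimately show ?thesis by (simp add: algebra_simps)
  qed
  define m where "m g h = beta FD (br p g) h" for g h
  have anti: "m g h = - m h g" for g h
    unfolding m_def using beta_inv[OF FD, of p g h] beta_sym[OF FD, of g "br p h"] by simp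
  have exp: "br p g = (\<Sum>h\<in>G. m g h *\<^sub>R h)" if "g \<in> G" for g
    unfolding m_def using Bt.onb_expandW[OF G brP[OF p]] GP that by blast
  have X: "L g (br p g) + L (br p g) g = (\<Sum>h\<in>G. m g h *\<^sub>R (L g h + L h g))" if "g \<in> G" for g
  proof -
    have "L g (br p g) = (\<Sum>h\<in>G. m g h *\<^sub>R L g h)"
      using exp[OF that] lin_comb[OF Llin2, of g "\<lambda>h. m g h" G] by simp
    moreover have "L (br p g) g = (\<Sum>h\<in>G. m g h *\<^sub>R L h g)"
      using exp[OF that] by simp
    ultimately show ?thesis by (simp add: scaleR_add_right sum.distrib)
  qed
  have "(\<Sum>g\<in>G. L g (br p g) + L (br p g) g) = (\<Sum>g\<in>G. \<Sum>h\<in>G. m g h *\<^sub>R (L g h + L h g))"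
    using X by (rule sum.cong[OF refl])
  also have "\<dots> = 0"
  proof (rule sum_antisym_zero)
    fix g h
    show "m g h *\<^sub>R (L g h + L h g) = - (m h g *\<^sub>R (L h g + L g h))"
      using anti[of g h] by (simp add: add.commute)
  qed
  finally have Z: "(\<Sum>g\<in>G. L g (br p g) + L (br p g) g) = 0" .
  have "L p (\<Sum>g\<in>G. L g g) = (\<Sum>g\<in>G. L p (L g g))" by simp
  also have "\<dots> = (\<Sum>g\<in>G. L g (L g p)) + (\<Sum>g\<in>G. L g (br p g) + L (br p g) g)"
    using e1 by (simp add: sum.distrib)
  finally show ?thesis using Z by simp
qed

lemma LPP: assumes q: "q \<in> PP" and p: "p \<in> PP" shows "L q p = 0"
proof -
  obtain FZ FP where FZ: "onb ZZ FZ" and FP: "onb PP FP" and FD: "onb DD (FZ \<union> FP)"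
    and disj: "FZ \<inter> FP = {}" by (rule bases)
  define FD where "FD = FZ \<union> FP"
  have FD': "onb DD FD" using FD by (simp add: FD_def)
  interpret Bt: symform "beta FD" using beta_bil beta_sym[OF FD'] by unfold_locales auto
  have pb: "Bt.posdef PP" unfolding Bt.posdef_def using beta_pos[OF FD'] by blast
  obtain G where G: "Bt.onb PP G" using Bt.onb_exists[OF sP pb] by blast
  have GP: "G \<subseteq> PP" and finG: "finite G" using G by (auto simp: Bt.onb_def)
  have FZZ: "FZ \<subseteq> ZZ" and FPP: "FP \<subseteq> PP" and finZ: "finite FZ" and finP: "finite FP"
    using FZ FP by (auto simp: onb_def)
  define v0 where "v0 = (\<Sum>g\<in>G. L g g)"
  have v0D: "v0 \<in> DD" unfolding v0_def
    using GP PD L_pres_D subspace_D by (intro subspace_sum) auto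
  have t0: "tr FD (\<lambda>y. L y v0) = 0"
  proof -
    have "tr FD (\<lambda>y. L y v0) = tr FD (\<lambda>y. L v0 y - br v0 y)"
      using torsion[of v0] by (simp add: algebra_simps)
    also have "\<dots> = tr FD (\<lambda>y. L v0 y) - tr FD (\<lambda>y. br v0 y)" by (rule tr_diff)
    also have "\<dots> = 0" using tr_Lx[OF FD'] tr_ad_D[OF FD' v0D] by simp
    finally show ?thesis .
  qed
  have split: "tr FD (\<lambda>y. L y v0) = (\<Sum>f\<in>FZ. b (L f v0) f) + (\<Sum>f\<in>FP. b (L f v0) f)"
    unfolding tr_def FD_def using finZ finP disj by (simp add: sum.union_disjoint)
  have z0: "(\<Sum>f\<in>FZ. b (L f v0) f) = 0"
    using FZZ by (intro sum.neutral) (auto simp: ZZ_def)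
  have pf: "b (L f v0) f = - (\<Sum>g\<in>G. b (L g f) (L g f))" if "f \<in> FP" for f
  proof -
    have "L f v0 = (\<Sum>g\<in>G. L g (L g f))" unfolding v0_def
      using casimir[OF FD' G] FPP that by blast
    then have "b (L f v0) f = (\<Sum>g\<in>G. b (L g (L g f)) f)" by simp
    also have "\<dots> = (\<Sum>g\<in>G. - b (L g f) (L g f))"
    proof (rule sum.cong[OF refl])
      fix g show "b (L g (L g f)) f = - b (L g f) (L g f)" by (rule skewL)
    qed
    finally show ?thesis by (simp add: sum_negf)
  qed
  have nn: "b (L g f) (L g f) \<ge> 0" if "f \<in> FP" for f g
  proof (cases "L g f = 0")
    case False
    have "L g f \<in> DD" using L_pres_D that FPP PD by blast
    then have "b (L g f) (L g f) > 0" using posdef_D False unfolding posdef_def by blast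
    then show ?thesis by simp
  qed simp
  have s1: "(\<Sum>f\<in>FP. \<Sum>g\<in>G. b (L g f) (L g f)) = 0"
    using t0 split z0 pf by (simp add: sum_negf)
  have all0: "b (L g f) (L g f) = 0" if fg: "f \<in> FP" "g \<in> G" for f g
  proof -
    have h: "(\<Sum>g\<in>G. b (L g f) (L g f)) = 0"
      by (rule sum_nonneg_0[where f="\<lambda>f. \<Sum>g\<in>G. b (L g f) (L g f)", OF finP _ s1 fg(1)])
        (simp add: sum_nonneg nn)
    show ?thesis
      by (rule sum_nonneg_0[where f="\<lambda>g. b (L g f) (L g f)", OF finG _ h fg(2)]) (simp add: nn fg(1))
  qed
  have LGF: "L g f = 0" if fg: "f \<in> FP" "g \<in> G" for f g
  proof (rule ccontr)
    assume ne: "L g f \<noteq> 0"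
    have "L g f \<in> DD" using L_pres_D fg FPP PD by blast
    then have "b (L g f) (L g f) > 0" using ne posdef_D unfolding posdef_def by blast
    then show False using all0 fg by simp
  qed
  define pe where "pe = (\<Sum>f\<in>FP. b p f *\<^sub>R f)"
  have ppe: "p = pe" unfolding pe_def using onb_expandW[OF FP p] .
  have Lgp: "L g p = 0" if g: "g \<in> G" for g
  proof -
    have "L g pe = (\<Sum>f\<in>FP. b p f *\<^sub>R L g f)" unfolding pe_def by (rule lin_comb[OF Llin2])
    also have "\<dots> = 0" using LGF g by simp
    finally show ?thesis using ppe by simp
  qed
  define qe where "qe = (\<Sum>g\<in>G. beta FD q g *\<^sub>R g)"
  have qqe: "q = qe" unfolding qe_def using Bt.onb_expandW[OF G q] .
  have "L qe p = (\<Sum>g\<in>G. beta FD q g *\<^sub>R L g p)" unfolding qe_def by simp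
  also have "\<dots> = 0" using Lgp by simp
  finally show ?thesis using qqe by simp
qed

end


context FL begin

lemma decompZP: assumes d: "d \<in> DD" shows "\<exists>z p. z \<in> ZZ \<and> p \<in> PP \<and> d = z + p"
proof -
  obtain FZ where FZ: "onb ZZ FZ" using onb_exists[OF sZ pZ] by blast
  define z where "z = (\<Sum>f\<in>FZ. b d f *\<^sub>R f)"
  have zZ: "z \<in> ZZ" unfolding z_def by (rule onb_proj_in[OF FZ sZ])
  have "b (d - z) w = 0" if "w \<in> ZZ" for w unfolding z_def by (rule onb_proj_orth[OF FZ that])
  moreover have "d - z \<in> DD" using d zZ ZD subspace_D by (meson subsetD subspace_diff)
  ultimately have "d - z \<in> PP" by (simp add: PP_def)
  then show ?thesis using zZ by (intro exI[of _ z] exI[of _ "d - z"]) simp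
qed

lemma LbrDD: assumes d: "d \<in> DD" and d': "d' \<in> DD" shows "L (br d d') y = 0"
proof -
  obtain z p where zp: "z \<in> ZZ" "p \<in> PP" "d = z + p" using decompZP[OF d] by blast
  obtain z' p' where zp': "z' \<in> ZZ" "p' \<in> PP" "d' = z' + p'" using decompZP[OF d'] by blast
  have Lz: "L z w = 0" "L z' w = 0" for w using zp zp' by (auto simp: ZZ_def)
  have "L (br d d') y = L d (L d' y) - L d' (L d y)" by (rule flt)
  also have "\<dots> = L p (L p' y) - L p' (L p y)" using zp zp' Lz by simp
  also have "\<dots> = L (br p p') y" by (rule flt[symmetric])
  also have "br p p' = 0" using torsion[of p p'] LPP zp(2) zp'(2) by simp
  finally show ?thesis by simp
qed

lemma LbrSD: assumes s: "s \<in> SS" and e: "e \<in> DD" shows "L (br s e) y = 0"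
proof -
  obtain FD where FD: "onb DD FD" using onb_exists[OF subspace_D posdef_D] by blast
  define X where "X y = L (br s e) y" for y
  have lX: "linear X" unfolding X_def by (rule Llin2)
  have XD: "X y \<in> DD" if "y \<in> DD" for y unfolding X_def using L_pres_D that by blast
  have Xeq: "X y = L s (L e y) - L e (L s y)" for y unfolding X_def by (rule flt)
  have com: "L e (X y) = X (L e y)" for y
  proof -
    have "L (br e (br s e)) y = L e (X y) - X (L e y)" unfolding X_def by (rule flt)
    moreover have "L (br e (br s e)) y = 0" using LbrDD[OF e br_in_D] .
    ultimately show ?thesis by simp
  qed
  have lsX: "linear (\<lambda>y. L s (X y))" using linear_compose[OF lX Llin2] by (simp add: o_def)
  have sXD: "L s (X y) \<in> DD" if "y \<in> DD" for y using L_pres_D XD that by blast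
  have "tr FD (\<lambda>y. X (X y)) = tr FD (\<lambda>y. L s (L e (X y)) - L e (L s (X y)))"
    using Xeq by simp
  also have "\<dots> = tr FD (\<lambda>y. L s (L e (X y))) - tr FD (\<lambda>y. L e (L s (X y)))" by (rule tr_diff)
  also have "tr FD (\<lambda>y. L e (L s (X y))) = tr FD (\<lambda>y. L s (X (L e y)))"
    using tr_comm[OF FD subspace_D Llin2 lsX L_pres_D sXD] by simp
  also have "tr FD (\<lambda>y. L s (L e (X y))) = tr FD (\<lambda>y. L s (X (L e y)))" using com by simp
  finally have t0: "tr FD (\<lambda>y. X (X y)) = 0" by simp
  have skX: "b (X u) v = - b u (X v)" for u v unfolding X_def by (rule skewL)
  have "tr FD (\<lambda>y. X (X y)) = - (\<Sum>f\<in>FD. b (X f) (X f))" using tr_sq_skew[OF FD skX XD] .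
  then have s0: "(\<Sum>f\<in>FD. b (X f) (X f)) = 0" using t0 by simp
  have Xd: "X d = 0" if "d \<in> DD" for d by (rule sumsq_zero[OF FD subspace_D posdef_D lX XD s0 that])
  obtain s' d where sd: "s' \<in> SS" "d \<in> DD" "y = s' + d" using decomp by blast
  have "X y = X s' + X d" using sd by (simp add: X_def)
  also have "\<dots> = 0" using Xd[OF sd(2)] L_kill_S[OF sd(1)] by (simp add: X_def)
  finally show ?thesis by (simp add: X_def)
qed

lemma L_D_zero: assumes d: "d \<in> DD" shows "L d y = 0"
proof -
  have "\<forall>y. L d y = 0" using d
  proof (rule D_induct)
    show "subspace {d. \<forall>y. L d y = 0}" unfolding subspace_def by simp
    fix x x'
    obtain s1 d1 where 1: "s1 \<in> SS" "d1 \<in> DD" "x = s1 + d1" using decomp by blast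
    obtain s2 d2 where 2: "s2 \<in> SS" "d2 \<in> DD" "x' = s2 + d2" using decomp by blast
    have "br x x' = br s1 s2 + br s1 d2 - br s2 d1 + br d1 d2"
      using 1 2 br_anti[of d1 s2] by simp
    then show "\<forall>y. L (br x x') y = 0"
      using S_abelian[OF 1(1) 2(1)] LbrSD[OF 1(1) 2(2)] LbrSD[OF 2(1) 1(2)] LbrDD[OF 1(2) 2(2)]
      by simp
  qed
  then show ?thesis by blast
qed

lemma D_abelian: "d \<in> DD \<Longrightarrow> d' \<in> DD \<Longrightarrow> br d d' = 0"
  using torsion[of d d'] L_D_zero by simp

lemma even_D: "even (dim DD)"
proof (rule family_even[OF subspace_D posdef_D, where I = SS and A = br])
  show "\<forall>s\<in>SS. linear (br s)" using brlin2 by simp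
  show "\<forall>s\<in>SS. \<forall>x\<in>DD. br s x \<in> DD" using br_in_D by blast
  show "\<forall>s\<in>SS. \<forall>x\<in>DD. \<forall>y\<in>DD. b (br s x) y = - b x (br s y)" using Sskew by blast
  show "\<forall>s\<in>SS. \<forall>t\<in>SS. \<forall>x\<in>DD. br s (br t x) = br t (br s x)"
  proof (intro ballI)
    fix s t x assume st: "s \<in> SS" "t \<in> SS"
    have "br s (br t x) = br (br s t) x + br t (br s x)" by (rule jacobi2)
    then show "br s (br t x) = br t (br s x)" using S_abelian[OF st] by simp
  qed
  show "DD \<subseteq> span (\<Union>s\<in>SS. br s ` DD)"
  proof
    fix d assume "d \<in> DD"
    then show "d \<in> span (\<Union>s\<in>SS. br s ` DD)"
    proof (rule D_induct)
      show "subspace {d. d \<in> span (\<Union>s\<in>SS. br s ` DD)}" by (simp add: subspace_span)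
      fix x x'
      obtain s1 d1 where 1: "s1 \<in> SS" "d1 \<in> DD" "x = s1 + d1" using decomp by blast
      obtain s2 d2 where 2: "s2 \<in> SS" "d2 \<in> DD" "x' = s2 + d2" using decomp by blast
      have "br x x' = br s1 d2 - br s2 d1"
        using 1 2 br_anti[of d1 s2] S_abelian[OF 1(1) 2(1)] D_abelian[OF 1(2) 2(2)] by simp
      moreover have "br s1 d2 \<in> span (\<Union>s\<in>SS. br s ` DD)" using 1 2 by (intro span_base) blast
      moreover have "br s2 d1 \<in> span (\<Union>s\<in>SS. br s ` DD)" using 1 2 by (intro span_base) blast
      ultimately show "br x x' \<in> span (\<Union>s\<in>SS. br s ` DD)" by (simp add: span_diff)
    qed
  qed
qed

end


context LL begin

lemma backward_flat:
  assumes orth: "\<forall>s\<in>SS. \<forall>d\<in>DD. b s d = 0"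
    and plus: "SS + DD = UNIV"
    and abD: "abelian_set br DD" and abS: "abelian_set br SS"
  shows "flat br b"
proof -
  have dec: "\<exists>s d. s \<in> SS \<and> d \<in> DD \<and> x = s + d" for x
    using plus by (metis UNIV_I set_plus_elim)
  have orth': "b (br x y) s = 0" if "s \<in> SS" for x y s
    using orth that br_in_D bsym by metis
  have LsB: "L s v = br s v" if s: "s \<in> SS" for s v
  proof (rule Lchar)
    fix w
    have "b (br w s) v = b (br s v) w"
      using Sskew[OF s, of w v] br_anti[of w s] bsym[of w] by simp
    then show "2 * b (br s v) w = kos s v w" unfolding kos_def using orth'[OF s, of v w] by simp
  qed
  have LdB: "L d v = 0" if d: "d \<in> DD" for d v
  proof (rule Lchar)
    fix w
    obtain s1 d1 where 1: "s1 \<in> SS" "d1 \<in> DD" "v = s1 + d1" using dec by blast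
    obtain s2 d2 where 2: "s2 \<in> SS" "d2 \<in> DD" "w = s2 + d2" using dec by blast
    have z1: "br d d1 = 0" "br d2 d = 0" "br d1 d2 = 0" "br s1 s2 = 0"
      using abD abS d 1 2 unfolding abelian_set_def by blast+
    have t1: "b (br d v) w = - b (br s1 d) d2"
      using 1 2 z1 br_anti[of d s1] orth'[OF 2(1), of s1 d] by simp
    have t2: "b (br v w) d = b (br s1 d2) d - b (br s2 d1) d"
      using 1 2 z1 br_anti[of d1 s2] by simp
    have t3: "b (br w d) v = b (br s2 d) d1"
      using 1 2 z1 orth'[OF 1(1), of s2 d] by simp
    have c1: "b (br s1 d) d2 = - b (br s1 d2) d" using Sskew[OF 1(1), of d d2] bsym[of d] by simp
    have c2: "b (br s2 d1) d = - b (br s2 d) d1" using Sskew[OF 2(1), of d1 d] bsym[of d1] by simp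
    show "2 * b 0 w = kos d v w" unfolding kos_def using t1 t2 t3 c1 c2 by simp
  qed
  show ?thesis unfolding flat_def L_def[symmetric]
  proof (intro allI)
    fix u v w
    obtain s1 d1 where 1: "s1 \<in> SS" "d1 \<in> DD" "u = s1 + d1" using dec by blast
    obtain s2 d2 where 2: "s2 \<in> SS" "d2 \<in> DD" "v = s2 + d2" using dec by blast
    have Lu: "L u y = br s1 y" for y using 1 LsB LdB by simp
    have Lv: "L v y = br s2 y" for y using 2 LsB LdB by simp
    have "br s1 s2 = 0" using abS 1 2 unfolding abelian_set_def by blast
    then have "br s1 (br s2 w) - br s2 (br s1 w) = 0" using jacobi2[of s1 s2 w] by simp
    moreover have "L (br u v) w = 0" using LdB br_in_D by blast
    ultimately show "L (br u v) w - (L u (L v w) - L v (L u w)) = 0" using Lu Lv by simp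
  qed
qed

end

theorem theorem1p1:
  fixes br :: "'a::euclidean_space \<Rightarrow> 'a \<Rightarrow> 'a" and b :: "'a \<Rightarrow> 'a \<Rightarrow> real"
  assumes "lie_algebra br" and "lorentzian b"
  shows "((flat br b \<and> (\<exists>u\<in>skew_set br b. b u u < 0)) \<longleftrightarrow>
           ((\<forall>s\<in>skew_set br b. \<forall>d\<in>derived br. b s d = 0)
            \<and> skew_set br b \<inter> derived br = {0}
            \<and> skew_set br b + derived br = UNIV
            \<and> abelian_set br (derived br)
            \<and> abelian_set br (skew_set br b)
            \<and> (\<exists>u\<in>skew_set br b. b u u < 0)))
         \<and> (flat br b \<and> (\<exists>u\<in>skew_set br b. b u u < 0) \<longrightarrow>
           even (dim (derived br))
           \<and> (\<forall>a\<in>skew_set br b. \<forall>v. lc_prod br b a v = br a v)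
           \<and> (\<forall>a\<in>derived br. \<forall>v. lc_prod br b a v = 0))"
proof -
  interpret LL br b using assms by (rule LL.intro)
  have fwd: "((\<forall>s\<in>SS. \<forall>d\<in>DD. b s d = 0)
            \<and> SS \<inter> DD = {0}
            \<and> SS + DD = UNIV
            \<and> abelian_set br DD
            \<and> abelian_set br SS)
         \<and> (even (dim DD)
           \<and> (\<forall>a\<in>SS. \<forall>v. lc_prod br b a v = br a v)
           \<and> (\<forall>a\<in>DD. \<forall>v. lc_prod br b a v = 0))"
    if fl: "flat br b" and u0: "u0 \<in> SS" "b u0 u0 < 0" for u0
  proof -
    interpret F: FL br b u0 using fl u0 by unfold_locales auto
    have "\<forall>s\<in>SS. \<forall>d\<in>DD. b s d = 0" using F.S_perp_D bsym by metis
    moreover have "SS \<inter> DD = {0}"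
      using F.S_int_D subspace_0[OF subspace_S] subspace_0[OF subspace_D] by blast
    moreover have "SS + DD = UNIV" by (rule F.S_plus_D)
    moreover have "abelian_set br DD" unfolding abelian_set_def using F.D_abelian by blast
    moreover have "abelian_set br SS" unfolding abelian_set_def using F.S_abelian by blast
    moreover have "even (dim DD)" by (rule F.even_D)
    moreover have "\<forall>a\<in>SS. \<forall>v. lc_prod br b a v = br a v" using F.Ls unfolding L_def by blast
    moreover have "\<forall>a\<in>DD. \<forall>v. lc_prod br b a v = 0" using F.L_D_zero unfolding L_def by blast
    ultimately show ?thesis by blast
  qed
  have A: "(flat br b \<and> (\<exists>u\<in>SS. b u u < 0)) \<longleftrightarrow>
      ((\<forall>s\<in>SS. \<forall>d\<in>DD. b s d = 0) \<and> SS \<inter> DD = {0} \<and> SS + DD = UNIV \<and>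
        abelian_set br DD \<and> abelian_set br SS \<and> (\<exists>u\<in>SS. b u u < 0))"
  proof
    assume h: "flat br b \<and> (\<exists>u\<in>SS. b u u < 0)"
    then obtain u0 where "u0 \<in> SS" "b u0 u0 < 0" by blast
    then show "(\<forall>s\<in>SS. \<forall>d\<in>DD. b s d = 0) \<and> SS \<inter> DD = {0} \<and> SS + DD = UNIV \<and>
        abelian_set br DD \<and> abelian_set br SS \<and> (\<exists>u\<in>SS. b u u < 0)"
      using fwd h by blast
  next
    assume h: "(\<forall>s\<in>SS. \<forall>d\<in>DD. b s d = 0) \<and> SS \<inter> DD = {0} \<and> SS + DD = UNIV \<and>
        abelian_set br DD \<and> abelian_set br SS \<and> (\<exists>u\<in>SS. b u u < 0)"
    then show "flat br b \<and> (\<exists>u\<in>SS. b u u < 0)" using backward_flat by blast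
  qed
  have B: "flat br b \<and> (\<exists>u\<in>SS. b u u < 0) \<longrightarrow>
           even (dim DD) \<and> (\<forall>a\<in>SS. \<forall>v. lc_prod br b a v = br a v)
           \<and> (\<forall>a\<in>DD. \<forall>v. lc_prod br b a v = 0)"
  proof
    assume h: "flat br b \<and> (\<exists>u\<in>SS. b u u < 0)"
    then obtain u0 where "u0 \<in> SS" "b u0 u0 < 0" by blast
    then show "even (dim DD) \<and> (\<forall>a\<in>SS. \<forall>v. lc_prod br b a v = br a v)
           \<and> (\<forall>a\<in>DD. \<forall>v. lc_prod br b a v = 0)" using fwd h by blast
  qed
  show ?thesis using A B by blast
qed


end
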